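(* Let $A$ be an arbitrary Cayley--Dickson algebra over a field $F$, let $f(x)\in A[x]$ and $\lambda\in A\setminus F$. Then $\lambda$ is a spherical root of $f(x)$ if and only if $f(x)=g(x)\,p_\lambda(x)$ for some $g(x)\in A[x]$.
   Context: For an $F$-algebra $B$ with involution and $\gamma\in F^\times$, the Cayley--Dickson double $B\{\gamma\}$ is $B\times B$ with componentwise linear operations, product $(a,b)(c,d)=(ac+\gamma\bar d b,\ da+b\bar c)$ and involution $\overline{(a,b)}=(\bar a,-b)$. Cayley--Dickson algebras over $F$: $A_1=F[\ell_1:\ell_1^2=\ell_1+\mu]$ with $\mu\in F$, $4\mu+1\neq0$, involution $\overline{\alpha+\beta\ell_1}=(\alpha+\beta)-\beta\ell_1$, and $A_{k+1}=A_k\{\gamma_k\}$, $\gamma_k\in F^\times$; $F$ is identified with $F\cdot1$. These algebras are power-associative. Trace $\mathrm{tr}(\lambda)=\lambda+\bar\lambda\in F$, norm $\mathrm{n}(\lambda)=\bar\lambda\lambda\in F$, characteristic polynomial $p_\lambda(x)=x^2-\mathrm{tr}(\lambda)x+\mathrm{n}(\lambda)\in F[x]$. The polynomial ring $A[x]=A\otimes_F F[x]$ has central indeterminate $x$; every $f\in A[x]$ is written $f(x)=a_mx^m+\dots+a_1x+a_0$ with $a_k\in A$, products are computed by $(ax^i)(bx^j)=(ab)x^{i+j}$ extended bilinearly, and substitution is $f(r)=\sum_k a_k(r^k)$ for $r\in A$. A root $\lambda\in A\setminus F$ of $f$ is a spherical root if every $r\in A$ with $p_\lambda(r)=0$ is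 also a root of $f$. *)

theory Defs
  imports Main
begin

text \<open>
An element of A_n (n >= 1, dim 2^n) is a coordinate function x :: nat => F
with x i = 0 for i >= 2^n.  Level 1: x = x 0 + x 1 * l1.  Level k+1: the pair
(a,b) of A_k x A_k is encoded by coordinates [a on 0..<2^k, b on 2^k..<2^(k+1)].
Parameters: mu (for A_1) and gam k (the gamma_k used in A_(k+1) = A_k{gamma_k}).
\<close>

type_synonym 'a cd = "nat \<Rightarrow> 'a"

definition cd_carrier :: "nat \<Rightarrow> 'a::zero cd set" where
  "cd_carrier n = {x. \<forall>i. 2 ^ n \<le> i \<longrightarrow> x i = 0}"

definition cd_lo :: "nat \<Rightarrow> 'a::zero cd \<Rightarrow> 'a cd" where
  "cd_lo k x = (\<lambda>i. if i < 2 ^ k then x i else 0)"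

definition cd_hi :: "nat \<Rightarrow> 'a::zero cd \<Rightarrow> 'a cd" where
  "cd_hi k x = (\<lambda>i. if i < 2 ^ k then x (i + 2 ^ k) else 0)"

definition cd_join :: "nat \<Rightarrow> 'a::zero cd \<Rightarrow> 'a cd \<Rightarrow> 'a cd" where
  "cd_join k a b = (\<lambda>i. if i < 2 ^ k then a i
                         else if i < 2 ^ Suc k then b (i - 2 ^ k) else 0)"

definition cd_add :: "'a::ab_group_add cd \<Rightarrow> 'a cd \<Rightarrow> 'a cd" where
  "cd_add x y = (\<lambda>i. x i + y i)"

definition cd_neg :: "'a::ab_group_add cd \<Rightarrow> 'a cd" where
  "cd_neg x = (\<lambda>i. - x i)"

definition cd_smult :: "'a::field \<Rightarrow> 'a cd \<Rightarrow> 'a cd" where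
  "cd_smult c x = (\<lambda>i. c * x i)"

definition cd_const :: "'a::zero \<Rightarrow> 'a cd" where
  "cd_const c = (\<lambda>i. if i = 0 then c else 0)"

text \<open>Involution: on A_1, alpha + beta l1 |-> (alpha+beta) - beta l1;
  on A_(k+1), (a,b) |-> (conj a, -b).\<close>
fun cd_conj :: "nat \<Rightarrow> 'a::field cd \<Rightarrow> 'a cd" where
  "cd_conj 0 x = x"
| "cd_conj (Suc 0) x = (\<lambda>i. if i = 0 then x 0 + x 1 else if i = 1 then - x 1 else 0)"
| "cd_conj (Suc (Suc k)) x =
     cd_join (Suc k) (cd_conj (Suc k) (cd_lo (Suc k) x)) (cd_neg (cd_hi (Suc k) x))"

text \<open>Multiplication: on A_1, l1^2 = l1 + mu; on A_(k+1) = A_k{gamma_k},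
  (a,b)(c,d) = (ac + gamma_k (conj d) b, da + b (conj c)).\<close>
fun cd_mult :: "'a::field \<Rightarrow> (nat \<Rightarrow> 'a) \<Rightarrow> nat \<Rightarrow> 'a cd \<Rightarrow> 'a cd \<Rightarrow> 'a cd" where
  "cd_mult mu gam 0 x y = (\<lambda>i. 0)"
| "cd_mult mu gam (Suc 0) x y =
     (\<lambda>i. if i = 0 then x 0 * y 0 + mu * (x 1 * y 1)
          else if i = 1 then x 0 * y 1 + x 1 * y 0 + x 1 * y 1 else 0)"
| "cd_mult mu gam (Suc (Suc k)) x y =
     (let a = cd_lo (Suc k) x; b = cd_hi (Suc k) x;
          c = cd_lo (Suc k) y; d = cd_hi (Suc k) y;
          M = cd_mult mu gam (Suc k); C = cd_conj (Suc k)
      in cd_join (Suc k)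
           (cd_add (M a c) (cd_smult (gam (Suc k)) (M (C d) b)))
           (cd_add (M d a) (M b (C c))))"

text \<open>Trace and norm, as elements of F (their coordinate 0; they lie in F = F*1).\<close>
definition cd_tr :: "nat \<Rightarrow> 'a::field cd \<Rightarrow> 'a" where
  "cd_tr n x = cd_add x (cd_conj n x) 0"

definition cd_norm :: "'a::field \<Rightarrow> (nat \<Rightarrow> 'a) \<Rightarrow> nat \<Rightarrow> 'a cd \<Rightarrow> 'a" where
  "cd_norm mu gam n x = cd_mult mu gam n (cd_conj n x) x 0"

fun cd_pow :: "'a::field \<Rightarrow> (nat \<Rightarrow> 'a) \<Rightarrow> nat \<Rightarrow> 'a cd \<Rightarrow> nat \<Rightarrow> 'a cd" where
  "cd_pow mu gam n r 0 = cd_const 1"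
| "cd_pow mu gam n r (Suc k) = cd_mult mu gam n r (cd_pow mu gam n r k)"

text \<open>Polynomials in A[x] (central indeterminate): coefficient sequences
  f :: nat => A with finite support and all coefficients in A.\<close>
definition cd_is_poly :: "nat \<Rightarrow> (nat \<Rightarrow> 'a::zero cd) \<Rightarrow> bool" where
  "cd_is_poly n f \<longleftrightarrow> finite {k. f k \<noteq> (\<lambda>i. 0)} \<and> (\<forall>k. f k \<in> cd_carrier n)"

definition cd_pmult :: "'a::field \<Rightarrow> (nat \<Rightarrow> 'a) \<Rightarrow> nat \<Rightarrow>
    (nat \<Rightarrow> 'a cd) \<Rightarrow> (nat \<Rightarrow> 'a cd) \<Rightarrow> (nat \<Rightarrow> 'a cd)" where
  "cd_pmult mu gam n f g = (\<lambda>k. (\<lambda>i. \<Sum>j\<le>k. cd_mult mu gam n (f j) (g (k - j)) i))"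

definition cd_eval :: "'a::field \<Rightarrow> (nat \<Rightarrow> 'a) \<Rightarrow> nat \<Rightarrow>
    (nat \<Rightarrow> 'a cd) \<Rightarrow> 'a cd \<Rightarrow> 'a cd" where
  "cd_eval mu gam n f r =
     (\<lambda>i. \<Sum>k\<in>{k. f k \<noteq> (\<lambda>i. 0)}. cd_mult mu gam n (f k) (cd_pow mu gam n r k) i)"

definition cd_charpoly :: "'a::field \<Rightarrow> (nat \<Rightarrow> 'a) \<Rightarrow> nat \<Rightarrow> 'a cd \<Rightarrow> (nat \<Rightarrow> 'a cd)" where
  "cd_charpoly mu gam n l =
     (\<lambda>k. if k = 0 then cd_const (cd_norm mu gam n l)
          else if k = 1 then cd_const (- cd_tr n l)
          else if k = 2 then cd_const 1 else (\<lambda>i. 0))"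

definition cd_spherical_root :: "'a::field \<Rightarrow> (nat \<Rightarrow> 'a) \<Rightarrow> nat \<Rightarrow>
    (nat \<Rightarrow> 'a cd) \<Rightarrow> 'a cd \<Rightarrow> bool" where
  "cd_spherical_root mu gam n f l \<longleftrightarrow>
     l \<in> cd_carrier n \<and> l \<notin> range cd_const \<and> cd_eval mu gam n f l = (\<lambda>i. 0) \<and>
     (\<forall>r\<in>cd_carrier n. cd_eval mu gam n (cd_charpoly mu gam n l) r = (\<lambda>i. 0)
        \<longrightarrow> cd_eval mu gam n f r = (\<lambda>i. 0))"

end

theory Submission imports Defs "HOL-Computational_Algebra.Polynomial" begin

lemma lvl_induct[case_names zero one step]:
  assumes "P 0" "P (Suc 0)" "\<And>k. P (Suc k) \<Longrightarrow> P (Suc (Suc k))"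
  shows "P n"
proof -
  have "P n \<and> P (Suc n)" by (induct n) (auto intro: assms)
  then show ?thesis by simp
qed

lemma carrier_iff: "x \<in> cd_carrier k \<longleftrightarrow> (\<forall>i. 2 ^ k \<le> i \<longrightarrow> x i = 0)"
  by (simp add: cd_carrier_def)

lemma lo_carrier[simp]: "cd_lo k x \<in> cd_carrier k"
  by (simp add: cd_carrier_def cd_lo_def)
lemma hi_carrier[simp]: "cd_hi k x \<in> cd_carrier k"
  by (simp add: cd_carrier_def cd_hi_def)
lemma join_carrier[simp]: "cd_join k a b \<in> cd_carrier (Suc k)"
  by (simp add: cd_carrier_def cd_join_def)

lemma lo_join[simp]: "a \<in> cd_carrier k \<Longrightarrow> cd_lo k (cd_join k a b) = a"
  by (auto simp: cd_lo_def cd_join_def cd_carrier_def fun_eq_iff)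
lemma hi_join[simp]: "b \<in> cd_carrier k \<Longrightarrow> cd_hi k (cd_join k a b) = b"
  by (auto simp: cd_hi_def cd_join_def cd_carrier_def fun_eq_iff)
lemma join_lo_hi: "x \<in> cd_carrier (Suc k) \<Longrightarrow> cd_join k (cd_lo k x) (cd_hi k x) = x"
  by (auto simp: cd_hi_def cd_lo_def cd_join_def cd_carrier_def fun_eq_iff)

lemma join_eq_iff:
  assumes "a \<in> cd_carrier k" "b \<in> cd_carrier k" "c \<in> cd_carrier k" "d \<in> cd_carrier k"
  shows "cd_join k a b = cd_join k c d \<longleftrightarrow> a = c \<and> b = d"
  by (metis assms lo_join hi_join)

lemma join_lin: "cd_join k (\<lambda>i. (s::'a::field) * a i + t * c i) (\<lambda>i. s * b i + t * d i) =
   (\<lambda>i. s * cd_join k a b i + t * cd_join k c d i)"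
  by (auto simp: cd_join_def fun_eq_iff)
lemma lo_lin: "cd_lo k (\<lambda>i. (s::'a::field) * a i + t * c i) = (\<lambda>i. s * cd_lo k a i + t * cd_lo k c i)"
  by (auto simp: cd_lo_def fun_eq_iff)
lemma hi_lin: "cd_hi k (\<lambda>i. (s::'a::field) * a i + t * c i) = (\<lambda>i. s * cd_hi k a i + t * cd_hi k c i)"
  by (auto simp: cd_hi_def fun_eq_iff)

lemma carrier_mono: "k \<le> m \<Longrightarrow> x \<in> cd_carrier k \<Longrightarrow> x \<in> cd_carrier m"
proof -
  assume km: "k \<le> m" and x: "x \<in> cd_carrier k"
  have "(2::nat) ^ k \<le> 2 ^ m" using km by (simp add: power_increasing)
  then show ?thesis using x order_trans unfolding cd_carrier_def by blast
qed

lemma conj_lin: "cd_conj n (\<lambda>i. (s::'a::field) * x i + t * y i) = (\<lambda>i. s * cd_conj n x i + t * cd_conj n y i)"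
proof (induction n arbitrary: x y rule: lvl_induct)
  case zero then show ?case by simp
next
  case one then show ?case by (auto simp: fun_eq_iff algebra_simps)
next
  case (step k)
  show ?case
    by (simp add: lo_lin hi_lin step cd_neg_def join_lin[symmetric])
qed


lemma mult_lin:
  "cd_mult mu gam n (\<lambda>i. (s::'a::field) * x i + t * y i) z =
     (\<lambda>i. s * cd_mult mu gam n x z i + t * cd_mult mu gam n y z i) \<and>
   cd_mult mu gam n z (\<lambda>i. s * x i + t * y i) =
     (\<lambda>i. s * cd_mult mu gam n z x i + t * cd_mult mu gam n z y i)"
proof (induction n arbitrary: x y z s t rule: lvl_induct)
  case zero then show ?case by simp
next
  case one then show ?case by (auto simp: fun_eq_iff algebra_simps)
next
  case (step k)
  note IH1 = step[THEN conjunct1] and IH2 = step[THEN conjunct2]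
  show ?case
    apply (simp only: cd_mult.simps Let_def lo_lin hi_lin conj_lin IH1 IH2)
    apply (auto simp: fun_eq_iff cd_join_def cd_add_def cd_smult_def algebra_simps)
    done
qed


lemma mult_lin1: "cd_mult mu gam n (\<lambda>i. (s::'a::field) * x i + t * y i) z =
     (\<lambda>i. s * cd_mult mu gam n x z i + t * cd_mult mu gam n y z i)"
  using mult_lin by blast
lemma mult_lin2: "cd_mult mu gam n z (\<lambda>i. (s::'a::field) * x i + t * y i) =
     (\<lambda>i. s * cd_mult mu gam n z x i + t * cd_mult mu gam n z y i)"
  using mult_lin by blast
lemma conj_lin': "cd_conj n (\<lambda>i. (s::'a::field) * x i + t * y i) = (\<lambda>i. s * cd_conj n x i + t * cd_conj n y i)"
  by (rule conj_lin)
lemma mult_add1: "cd_mult mu gam n (\<lambda>i. (x i::'a::field) + y i) z = (\<lambda>i. cd_mult mu gam n x z i + cd_mult mu gam n y z i)"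
  using mult_lin1[of mu gam n 1 x 1 y z] by simp
lemma mult_add2: "cd_mult mu gam n z (\<lambda>i. (x i::'a::field) + y i) = (\<lambda>i. cd_mult mu gam n z x i + cd_mult mu gam n z y i)"
  using mult_lin2[of mu gam n z 1 x 1 y] by simp
lemma mult_smult1: "cd_mult mu gam n (\<lambda>i. (s::'a::field) * x i) z = (\<lambda>i. s * cd_mult mu gam n x z i)"
  using mult_lin1[of mu gam n s x 0 x z] by simp
lemma mult_smult2: "cd_mult mu gam n z (\<lambda>i. (s::'a::field) * x i) = (\<lambda>i. s * cd_mult mu gam n z x i)"
  using mult_lin2[of mu gam n z s x 0 x] by simp
lemma mult_zero1[simp]: "cd_mult mu gam n (\<lambda>i. 0::'a::field) z = (\<lambda>i. 0)"
  using mult_smult1[of mu gam n 0 z z] by simp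
lemma mult_zero2[simp]: "cd_mult mu gam n z (\<lambda>i. 0::'a::field) = (\<lambda>i. 0)"
  using mult_smult2[of mu gam n z 0 z] by simp
lemma mult_neg1: "cd_mult mu gam n (\<lambda>i. - (x i::'a::field)) z = (\<lambda>i. - cd_mult mu gam n x z i)"
  using mult_smult1[of mu gam n "-1" x z] by simp
lemma mult_neg2: "cd_mult mu gam n z (\<lambda>i. - (x i::'a::field)) = (\<lambda>i. - cd_mult mu gam n z x i)"
  using mult_smult2[of mu gam n z "-1" x] by simp
lemma mult_diff1: "cd_mult mu gam n (\<lambda>i. (x i::'a::field) - y i) z = (\<lambda>i. cd_mult mu gam n x z i - cd_mult mu gam n y z i)"
  using mult_lin1[of mu gam n 1 x "-1" y z] by simp
lemma mult_diff2: "cd_mult mu gam n z (\<lambda>i. (x i::'a::field) - y i) = (\<lambda>i. cd_mult mu gam n z x i - cd_mult mu gam n z y i)"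
  using mult_lin2[of mu gam n z 1 x "-1" y] by simp
lemma conj_add: "cd_conj n (\<lambda>i. (x i::'a::field) + y i) = (\<lambda>i. cd_conj n x i + cd_conj n y i)"
  using conj_lin'[of n 1 x 1 y] by simp
lemma conj_smult: "cd_conj n (\<lambda>i. (s::'a::field) * x i) = (\<lambda>i. s * cd_conj n x i)"
  using conj_lin'[of n s x 0 x] by simp
lemma conj_zero[simp]: "cd_conj n (\<lambda>i. 0::'a::field) = (\<lambda>i. 0)"
  using conj_smult[of n 0 "\<lambda>i. 0"] by simp
lemma conj_neg: "cd_conj n (\<lambda>i. - (x i::'a::field)) = (\<lambda>i. - cd_conj n x i)"
  using conj_smult[of n "-1" x] by simp
lemma conj_diff: "cd_conj n (\<lambda>i. (x i::'a::field) - y i) = (\<lambda>i. cd_conj n x i - cd_conj n y i)"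
  using conj_lin'[of n 1 x "-1" y] by simp

lemma mult_carrier[simp]: "cd_mult mu gam (Suc k) x y \<in> cd_carrier (Suc k)"
proof (cases k)
  case 0 then show ?thesis by (auto simp: cd_carrier_def)
next
  case (Suc m) then show ?thesis by (simp only: cd_mult.simps Let_def join_carrier)
qed
lemma conj_carrier[simp]: "cd_conj (Suc k) (x::'a::field cd) \<in> cd_carrier (Suc k)"
proof (cases k)
  case 0 then show ?thesis by (auto simp: cd_carrier_def)
next
  case (Suc m) then show ?thesis by (simp only: cd_conj.simps join_carrier)
qed
lemma const_carrier[simp]: "cd_const s \<in> cd_carrier k"
  by (auto simp: cd_carrier_def cd_const_def)
lemma zero_carrier[simp]: "(\<lambda>i. 0) \<in> cd_carrier k"
  by (auto simp: cd_carrier_def)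
lemma lo_const[simp]: "cd_lo k (cd_const s) = cd_const s"
  by (auto simp: cd_lo_def cd_const_def fun_eq_iff)
lemma hi_const[simp]: "cd_hi k (cd_const s) = (\<lambda>i. 0)"
  by (auto simp: cd_hi_def cd_const_def fun_eq_iff)
lemma join_const: "cd_join (Suc k) (cd_const s) (\<lambda>i. 0) = cd_const s"
  by (auto simp: cd_join_def cd_const_def fun_eq_iff)
lemma carrier_lin: "x \<in> cd_carrier k \<Longrightarrow> y \<in> cd_carrier k \<Longrightarrow> (\<lambda>i. (s::'a::field) * x i + t * y i) \<in> cd_carrier k"
  by (auto simp: cd_carrier_def)
lemma carrier_add[simp]: "x \<in> cd_carrier k \<Longrightarrow> y \<in> cd_carrier k \<Longrightarrow> (\<lambda>i. (x i::'a::field) + y i) \<in> cd_carrier k"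
  by (auto simp: cd_carrier_def)
lemma carrier_diff[simp]: "x \<in> cd_carrier k \<Longrightarrow> y \<in> cd_carrier k \<Longrightarrow> (\<lambda>i. (x i::'a::field) - y i) \<in> cd_carrier k"
  by (auto simp: cd_carrier_def)
lemma carrier_smult[simp]: "x \<in> cd_carrier k \<Longrightarrow> (\<lambda>i. (s::'a::field) * x i) \<in> cd_carrier k"
  by (auto simp: cd_carrier_def)
lemma carrier_neg[simp]: "x \<in> cd_carrier k \<Longrightarrow> (\<lambda>i. - (x i::'a::field)) \<in> cd_carrier k"
  by (auto simp: cd_carrier_def)

lemma conj_const: "cd_conj (Suc k) (cd_const (s::'a::field)) = cd_const s"
proof (induction k)
  case 0 then show ?case by (auto simp: cd_const_def fun_eq_iff)
next
  case (Suc k) then show ?case by (simp add: cd_neg_def join_const)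
qed

lemma mult_SS: "cd_mult mu gam (Suc (Suc k)) x y = cd_join (Suc k)
   (\<lambda>i. cd_mult mu gam (Suc k) (cd_lo (Suc k) x) (cd_lo (Suc k) y) i
        + gam (Suc k) * cd_mult mu gam (Suc k) (cd_conj (Suc k) (cd_hi (Suc k) y)) (cd_hi (Suc k) x) i)
   (\<lambda>i. cd_mult mu gam (Suc k) (cd_hi (Suc k) y) (cd_lo (Suc k) x) i
        + cd_mult mu gam (Suc k) (cd_hi (Suc k) x) (cd_conj (Suc k) (cd_lo (Suc k) y)) i)"
  by (simp add: Let_def cd_add_def cd_smult_def)

lemma mult_join: "a \<in> cd_carrier (Suc k) \<Longrightarrow> b \<in> cd_carrier (Suc k) \<Longrightarrow> c \<in> cd_carrier (Suc k) \<Longrightarrow> d \<in> cd_carrier (Suc k) \<Longrightarrow>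
  cd_mult mu gam (Suc (Suc k)) (cd_join (Suc k) a b) (cd_join (Suc k) c d) = cd_join (Suc k)
   (\<lambda>i. cd_mult mu gam (Suc k) a c i + gam (Suc k) * cd_mult mu gam (Suc k) (cd_conj (Suc k) d) b i)
   (\<lambda>i. cd_mult mu gam (Suc k) d a i + cd_mult mu gam (Suc k) b (cd_conj (Suc k) c) i)"
  by (simp add: mult_SS del: cd_mult.simps)

lemma conj_join: "a \<in> cd_carrier (Suc k) \<Longrightarrow> b \<in> cd_carrier (Suc k) \<Longrightarrow>
  cd_conj (Suc (Suc k)) (cd_join (Suc k) a b) = cd_join (Suc k) (cd_conj (Suc k) a) (\<lambda>i. - (b i::'a::field))"
  by (simp add: cd_neg_def)

lemma mult_const:
  "y \<in> cd_carrier (Suc k) \<Longrightarrow> cd_mult mu gam (Suc k) (cd_const s) y = (\<lambda>i. (s::'a::field) * y i) \<and>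
     cd_mult mu gam (Suc k) y (cd_const s) = (\<lambda>i. s * y i)"
proof (induction k arbitrary: y)
  case 0 then show ?case by (auto simp: cd_const_def fun_eq_iff cd_carrier_def)
next
  case (Suc k)
  define a where "a = cd_lo (Suc k) y"
  define b where "b = cd_hi (Suc k) y"
  have y: "y = cd_join (Suc k) a b" using Suc.prems by (simp add: a_def b_def join_lo_hi)
  have ab: "a \<in> cd_carrier (Suc k)" "b \<in> cd_carrier (Suc k)" by (simp_all add: a_def b_def)
  have e1: "cd_mult mu gam (Suc (Suc k)) (cd_const s) y = cd_mult mu gam (Suc (Suc k)) (cd_join (Suc k) (cd_const s) (\<lambda>i. 0)) (cd_join (Suc k) a b)"
    by (simp only: y join_const)
  have e2: "cd_mult mu gam (Suc (Suc k)) y (cd_const s) = cd_mult mu gam (Suc (Suc k)) (cd_join (Suc k) a b) (cd_join (Suc k) (cd_const s) (\<lambda>i. 0))"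
    by (simp only: y join_const)
  have e3: "(\<lambda>i. s * y i) = (\<lambda>i. s * cd_join (Suc k) a b i)" by (simp only: y)
  show ?case
    unfolding e1 e2 e3
    apply (simp add: mult_join ab Suc.IH conj_const del: cd_mult.simps)
    apply (auto simp: cd_join_def fun_eq_iff)
    done
qed


declare cd_mult.simps(3)[simp del] cd_conj.simps(3)[simp del]

lemma split_SS:
  assumes "x \<in> cd_carrier (Suc (Suc k))"
  obtains a b where "x = cd_join (Suc k) a b" "a \<in> cd_carrier (Suc k)" "b \<in> cd_carrier (Suc k)"
  using assms join_lo_hi lo_carrier hi_carrier by metis

lemma conj_conj: "x \<in> cd_carrier (Suc k) \<Longrightarrow> cd_conj (Suc k) (cd_conj (Suc k) (x::'a::field cd)) = x"
proof (induction k arbitrary: x)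
  case 0 then show ?case by (auto simp: fun_eq_iff cd_carrier_def)
next
  case (Suc k)
  obtain a b where x: "x = cd_join (Suc k) a b" and ab: "a \<in> cd_carrier (Suc k)" "b \<in> cd_carrier (Suc k)"
    using Suc.prems split_SS by blast
  show ?case unfolding x
    by (simp add: conj_join ab Suc.IH)
qed

lemma tr_join: "a \<in> cd_carrier (Suc k) \<Longrightarrow> b \<in> cd_carrier (Suc k) \<Longrightarrow>
   cd_tr (Suc (Suc k)) (cd_join (Suc k) a (b::'a::field cd)) = cd_tr (Suc k) a"
  by (simp add: cd_tr_def cd_add_def conj_join) (simp add: cd_join_def)

lemma norm_join: "a \<in> cd_carrier (Suc k) \<Longrightarrow> b \<in> cd_carrier (Suc k) \<Longrightarrow>
   cd_norm mu gam (Suc (Suc k)) (cd_join (Suc k) a (b::'a::field cd)) = cd_norm mu gam (Suc k) a - gam (Suc k) * cd_norm mu gam (Suc k) b"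
  by (simp add: cd_norm_def conj_join mult_join mult_neg2) (simp add: cd_join_def)

lemma tr_prop: "x \<in> cd_carrier (Suc k) \<Longrightarrow> (\<lambda>i. x i + cd_conj (Suc k) (x::'a::field cd) i) = cd_const (cd_tr (Suc k) x)"
proof (induction k arbitrary: x)
  case 0 then show ?case by (auto simp: fun_eq_iff cd_carrier_def cd_tr_def cd_add_def cd_const_def)
next
  case (Suc k)
  obtain a b where x: "x = cd_join (Suc k) a b" and ab: "a \<in> cd_carrier (Suc k)" "b \<in> cd_carrier (Suc k)"
    using Suc.prems split_SS by blast
  have "(\<lambda>i. cd_join (Suc k) a b i + cd_join (Suc k) (cd_conj (Suc k) a) (\<lambda>i. - b i) i)
     = cd_join (Suc k) (\<lambda>i. a i + cd_conj (Suc k) a i) (\<lambda>i. 0)"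
    by (auto simp: cd_join_def fun_eq_iff)
  also have "\<dots> = cd_const (cd_tr (Suc k) a)" by (simp add: Suc.IH ab join_const)
  finally show ?case unfolding x by (simp add: conj_join ab tr_join)
qed


lemma norm_props:
  fixes x :: "'a::field cd"
  assumes "x \<in> cd_carrier (Suc k)"
  shows "cd_mult mu gam (Suc k) (cd_conj (Suc k) x) x = cd_const (cd_norm mu gam (Suc k) x) \<and>
    cd_mult mu gam (Suc k) x (cd_conj (Suc k) x) = cd_const (cd_norm mu gam (Suc k) x) \<and>
    cd_mult mu gam (Suc k) x x = (\<lambda>i. cd_tr (Suc k) x * x i - cd_const (cd_norm mu gam (Suc k) x) i)"
using assms proof (induction k arbitrary: x)
  case 0 then show ?case
    by (auto simp: fun_eq_iff cd_carrier_def cd_tr_def cd_add_def cd_const_def cd_norm_def algebra_simps)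
next
  case (Suc k)
  obtain a b where x: "x = cd_join (Suc k) a b" and ab: "a \<in> cd_carrier (Suc k)" "b \<in> cd_carrier (Suc k)"
    using Suc.prems split_SS by blast
  note IHa = Suc.IH[OF ab(1)] and IHb = Suc.IH[OF ab(2)]
  let ?M = "cd_mult mu gam (Suc k)" and ?C = "cd_conj (Suc k)" and ?g = "gam (Suc k)"
  let ?na = "cd_norm mu gam (Suc k) a" and ?nb = "cd_norm mu gam (Suc k) b"
  have nx: "cd_norm mu gam (Suc (Suc k)) x = ?na - ?g * ?nb" unfolding x by (simp add: norm_join ab)
  have tx: "cd_tr (Suc (Suc k)) x = cd_tr (Suc k) a" unfolding x by (simp add: tr_join ab)
  have cx: "cd_conj (Suc (Suc k)) x = cd_join (Suc k) (?C a) (\<lambda>i. - b i)" unfolding x by (simp add: conj_join ab)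
  have P1: "cd_mult mu gam (Suc (Suc k)) (cd_conj (Suc (Suc k)) x) x =
     cd_join (Suc k) (\<lambda>i. ?M (?C a) a i + ?g * ?M (?C b) (\<lambda>i. - b i) i) (\<lambda>i. ?M b (?C a) i + ?M (\<lambda>i. - b i) (?C a) i)"
    unfolding cx unfolding x by (simp add: mult_join ab)
  also have "\<dots> = cd_join (Suc k) (\<lambda>i. cd_const ?na i - ?g * cd_const ?nb i) (\<lambda>i. 0)"
    by (simp add: mult_neg1 mult_neg2 IHa IHb)
  also have "\<dots> = cd_const (cd_norm mu gam (Suc (Suc k)) x)"
    unfolding nx by (auto simp: cd_join_def cd_const_def fun_eq_iff)
  finally have R1: "cd_mult mu gam (Suc (Suc k)) (cd_conj (Suc (Suc k)) x) x = cd_const (cd_norm mu gam (Suc (Suc k)) x)" .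
  have "cd_mult mu gam (Suc (Suc k)) x (cd_conj (Suc (Suc k)) x) =
     cd_join (Suc k) (\<lambda>i. ?M a (?C a) i + ?g * ?M (?C (\<lambda>i. - b i)) b i) (\<lambda>i. ?M (\<lambda>i. - b i) a i + ?M b (?C (?C a)) i)"
    unfolding cx unfolding x by (simp add: mult_join ab)
  also have "\<dots> = cd_join (Suc k) (\<lambda>i. cd_const ?na i - ?g * cd_const ?nb i) (\<lambda>i. 0)"
    by (simp add: mult_neg1 mult_neg2 conj_neg IHa IHb conj_conj ab)
  also have "\<dots> = cd_const (cd_norm mu gam (Suc (Suc k)) x)"
    unfolding nx by (auto simp: cd_join_def cd_const_def fun_eq_iff)
  finally have R2: "cd_mult mu gam (Suc (Suc k)) x (cd_conj (Suc (Suc k)) x) = cd_const (cd_norm mu gam (Suc (Suc k)) x)" .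
  have "cd_mult mu gam (Suc (Suc k)) x x =
     cd_join (Suc k) (\<lambda>i. ?M a a i + ?g * ?M (?C b) b i) (\<lambda>i. ?M b a i + ?M b (?C a) i)"
    unfolding x by (simp add: mult_join ab)
  also have "(\<lambda>i. ?M b a i + ?M b (?C a) i) = ?M b (\<lambda>i. a i + ?C a i)" by (simp add: mult_add2)
  also have "\<dots> = ?M b (cd_const (cd_tr (Suc k) a))" by (simp add: tr_prop ab)
  also have "\<dots> = (\<lambda>i. cd_tr (Suc k) a * b i)" using mult_const ab by blast
  finally have "cd_mult mu gam (Suc (Suc k)) x x = cd_join (Suc k)
     (\<lambda>i. cd_tr (Suc k) a * a i - cd_const ?na i + ?g * cd_const ?nb i) (\<lambda>i. cd_tr (Suc k) a * b i)"
    by (simp add: IHa IHb)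
  also have "\<dots> = (\<lambda>i. cd_tr (Suc (Suc k)) x * x i - cd_const (cd_norm mu gam (Suc (Suc k)) x) i)"
    unfolding nx tx unfolding x by (auto simp: cd_join_def cd_const_def fun_eq_iff algebra_simps)
  finally show ?case using R1 R2 by blast
qed


definition nrm1 :: "'a::field \<Rightarrow> 'a cd \<Rightarrow> 'a" where
  "nrm1 mu z = z 0 * z 0 + z 0 * z 1 - mu * (z 1 * z 1)"

lemma join_zero: "x \<in> cd_carrier k \<Longrightarrow> cd_join k x (\<lambda>i. 0) = x"
  by (auto simp: cd_join_def cd_carrier_def fun_eq_iff)

lemma carrier1_Suc: "x \<in> cd_carrier (Suc 0) \<Longrightarrow> x \<in> cd_carrier (Suc k)"
  by (rule carrier_mono[of "Suc 0"]) auto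

lemma conj_emb: "x \<in> cd_carrier (Suc 0) \<Longrightarrow> cd_conj (Suc k) (x::'a::field cd) = cd_conj (Suc 0) x"
proof (induction k)
  case 0 then show ?case by simp
next
  case (Suc k)
  have xk: "x \<in> cd_carrier (Suc k)" using Suc.prems carrier1_Suc by blast
  have c1: "cd_conj (Suc 0) x \<in> cd_carrier (Suc k)" using carrier1_Suc conj_carrier by blast
  have "cd_conj (Suc (Suc k)) x = cd_conj (Suc (Suc k)) (cd_join (Suc k) x (\<lambda>i. 0))"
    using xk by (simp only: join_zero)
  also have "\<dots> = cd_join (Suc k) (cd_conj (Suc k) x) (\<lambda>i. - 0)"
    by (simp add: conj_join xk)
  also have "\<dots> = cd_conj (Suc 0) x" using Suc c1 by (simp add: join_zero del: cd_conj.simps)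
  finally show ?case .
qed

lemma mult_emb: "x \<in> cd_carrier (Suc 0) \<Longrightarrow> y \<in> cd_carrier (Suc 0) \<Longrightarrow>
   cd_mult mu gam (Suc k) x y = cd_mult mu gam (Suc 0) (x::'a::field cd) y"
proof (induction k)
  case 0 then show ?case by simp
next
  case (Suc k)
  have xk: "x \<in> cd_carrier (Suc k)" "y \<in> cd_carrier (Suc k)" using Suc.prems carrier1_Suc by blast+
  have c1: "cd_mult mu gam (Suc 0) x y \<in> cd_carrier (Suc k)" using carrier1_Suc mult_carrier by blast
  have "cd_mult mu gam (Suc (Suc k)) x y = cd_mult mu gam (Suc (Suc k)) (cd_join (Suc k) x (\<lambda>i. 0)) (cd_join (Suc k) y (\<lambda>i. 0))"
    using xk by (simp only: join_zero)
  also have "\<dots> = cd_join (Suc k) (cd_mult mu gam (Suc k) x y) (\<lambda>i. 0)"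
    by (simp add: mult_join xk)
  also have "\<dots> = cd_mult mu gam (Suc 0) x y" using Suc c1 by (simp add: join_zero del: cd_mult.simps)
  finally show ?case .
qed

lemma tr_emb: "x \<in> cd_carrier (Suc 0) \<Longrightarrow> cd_tr (Suc k) (x::'a::field cd) = 2 * x 0 + x 1"
  unfolding cd_tr_def cd_add_def by (subst conj_emb) simp_all

lemma norm_emb: "x \<in> cd_carrier (Suc 0) \<Longrightarrow> cd_norm mu gam (Suc k) (x::'a::field cd) = nrm1 mu x"
proof -
  assume x: "x \<in> cd_carrier (Suc 0)"
  have "cd_norm mu gam (Suc k) x = cd_mult mu gam (Suc k) (cd_conj (Suc 0) x) x 0"
    unfolding cd_norm_def using x by (subst conj_emb) simp_all
  also have "\<dots> = cd_mult mu gam (Suc 0) (cd_conj (Suc 0) x) x 0"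
    using x conj_carrier[of 0 x] by (subst mult_emb) simp_all
  also have "\<dots> = nrm1 mu x" by (simp add: nrm1_def algebra_simps)
  finally show ?thesis .
qed

lemma nrm1_conj: "nrm1 mu (cd_conj (Suc 0) z) = nrm1 mu (z::'a::field cd)"
  by (simp add: nrm1_def algebra_simps)

lemma ZD:
  fixes z a :: "'a::field cd"
  assumes "z \<in> cd_carrier (Suc 0)" "nrm1 mu z \<noteq> 0" "a \<in> cd_carrier (Suc k)"
  shows "(cd_mult mu gam (Suc k) a z = (\<lambda>i. 0) \<longrightarrow> a = (\<lambda>i. 0)) \<and>
         (cd_mult mu gam (Suc k) z a = (\<lambda>i. 0) \<longrightarrow> a = (\<lambda>i. 0))"
using assms proof (induction k arbitrary: a z)
  case 0
  let ?n = "nrm1 mu z"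
  have R: "a = (\<lambda>i. 0)" if h: "cd_mult mu gam (Suc 0) a z = (\<lambda>i. 0)"
  proof -
    have E0: "a 0 * z 0 + mu * (a 1 * z 1) = 0" using fun_cong[OF h, of 0] by simp
    have E1: "a 0 * z 1 + a 1 * z 0 + a 1 * z 1 = 0" using fun_cong[OF h, of 1] by simp
    have "?n * a 0 = (z 0 + z 1) * (a 0 * z 0 + mu * (a 1 * z 1)) - mu * z 1 * (a 0 * z 1 + a 1 * z 0 + a 1 * z 1)"
      by (simp add: nrm1_def algebra_simps)
    then have "?n * a 0 = 0" using E0 E1 by simp
    then have a0: "a 0 = 0" using 0 by simp
    have "?n * a 1 = z 0 * (a 0 * z 1 + a 1 * z 0 + a 1 * z 1) - z 1 * (a 0 * z 0 + mu * (a 1 * z 1))"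
      by (simp add: nrm1_def algebra_simps)
    then have "?n * a 1 = 0" using E0 E1 by simp
    then have a1: "a 1 = 0" using 0 by simp
    show ?thesis using a0 a1 0(3) by (auto simp: fun_eq_iff cd_carrier_def) (metis One_nat_def less_2_cases not_le)
  qed
  have L: "cd_mult mu gam (Suc 0) z a = cd_mult mu gam (Suc 0) a z"
    by (auto simp: fun_eq_iff algebra_simps)
  show ?case using R L by auto
next
  case (Suc k)
  obtain a1 a2 where a: "a = cd_join (Suc k) a1 a2" and ab: "a1 \<in> cd_carrier (Suc k)" "a2 \<in> cd_carrier (Suc k)"
    using Suc.prems split_SS by blast
  have zk: "z \<in> cd_carrier (Suc k)" using carrier1_Suc Suc.prems by blast
  have z: "z = cd_join (Suc k) z (\<lambda>i. 0)" using join_zero zk by metis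
  have czk: "cd_conj (Suc k) z \<in> cd_carrier (Suc k)" by simp
  have cz: "cd_conj (Suc k) z \<in> cd_carrier (Suc 0)" "nrm1 mu (cd_conj (Suc k) z) \<noteq> 0"
    using Suc.prems conj_emb[of z k] nrm1_conj[of mu z] conj_carrier[of 0 z] by simp_all
  have "cd_mult mu gam (Suc (Suc k)) a z = cd_join (Suc k) (cd_mult mu gam (Suc k) a1 z) (cd_mult mu gam (Suc k) a2 (cd_conj (Suc k) z))"
    unfolding a by (subst (1) z) (simp add: mult_join ab zk)
  moreover have "cd_mult mu gam (Suc (Suc k)) z a = cd_join (Suc k) (cd_mult mu gam (Suc k) z a1) (cd_mult mu gam (Suc k) a2 z)"
    unfolding a by (subst (1) z) (simp add: mult_join ab zk)
  moreover have "(\<lambda>i. 0) = cd_join (Suc k) (\<lambda>i. 0) (\<lambda>i. 0::'a)" by (simp add: join_zero)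
  ultimately show ?case
    using Suc.IH[OF Suc.prems(1,2) ab(1)] Suc.IH[OF Suc.prems(1,2) ab(2)] Suc.IH[OF cz ab(2)]
    by (metis a join_eq_iff ab mult_carrier zero_carrier)
qed


lemma ZD2:
  fixes z1 z2 a :: "'a::field cd"
  assumes "z1 \<in> cd_carrier (Suc 0)" "z2 \<in> cd_carrier (Suc 0)" "nrm1 mu (\<lambda>i. z1 i - z2 i) \<noteq> 0"
    "a \<in> cd_carrier (Suc k)"
  shows "(cd_mult mu gam (Suc k) a z1 = cd_mult mu gam (Suc k) a z2 \<longrightarrow> a = (\<lambda>i. 0)) \<and>
         (cd_mult mu gam (Suc k) z1 a = cd_mult mu gam (Suc k) z2 a \<longrightarrow> a = (\<lambda>i. 0))"
proof -
  have zc: "(\<lambda>i. z1 i - z2 i) \<in> cd_carrier (Suc 0)" using assms by simp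
  note Z = ZD[OF zc assms(3,4), of gam]
  show ?thesis
  proof (intro conjI impI)
    assume h: "cd_mult mu gam (Suc k) a z1 = cd_mult mu gam (Suc k) a z2"
    have "cd_mult mu gam (Suc k) a (\<lambda>i. z1 i - z2 i) = (\<lambda>i. 0)" by (simp add: mult_diff2 h)
    then show "a = (\<lambda>i. 0)" using Z by blast
  next
    assume h: "cd_mult mu gam (Suc k) z1 a = cd_mult mu gam (Suc k) z2 a"
    have "cd_mult mu gam (Suc k) (\<lambda>i. z1 i - z2 i) a = (\<lambda>i. 0)" by (simp add: mult_diff1 h)
    then show "a = (\<lambda>i. 0)" using Z by blast
  qed
qed

lemma cancel_left: "(\<lambda>i. (P i::'a::field) + Q i) = (\<lambda>i. P i + Q' i) \<Longrightarrow> Q = Q'"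
  by (simp add: fun_eq_iff)
lemma cancel_right: "(\<lambda>i. (Q i::'a::field) + P i) = (\<lambda>i. Q' i + P i) \<Longrightarrow> Q = Q'"
  by (simp add: fun_eq_iff)
lemma cancel_g: "(\<lambda>i. (P i::'a::field) + g * Q i) = (\<lambda>i. P i + g * Q' i) \<Longrightarrow> g \<noteq> 0 \<Longrightarrow> Q = Q'"
  by (simp add: fun_eq_iff)
lemma cancel_g2: "(\<lambda>i. g * (Q i::'a::field) + P i) = (\<lambda>i. g * Q' i + P i) \<Longrightarrow> g \<noteq> 0 \<Longrightarrow> Q = Q'"
  by (simp add: fun_eq_iff)

lemma conj_zero_iff:
  "a \<in> cd_carrier (Suc k) \<Longrightarrow> cd_conj (Suc k) a = (\<lambda>i. 0::'a::field) \<Longrightarrow> a = (\<lambda>i. 0)"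
  by (metis conj_conj conj_zero)

lemma pairY:
  fixes x y1 y2 a :: "'a::field cd"
  assumes x: "x \<in> cd_carrier (Suc 0)" and y: "y1 \<in> cd_carrier (Suc 0)" "y2 \<in> cd_carrier (Suc 0)"
    and n: "nrm1 mu (\<lambda>i. y1 i - y2 i) \<noteq> 0" and a: "a \<in> cd_carrier (Suc (Suc k))"
    and g: "gam (Suc k) \<noteq> 0"
  shows "(cd_mult mu gam (Suc (Suc k)) a (cd_join (Suc k) x y1) = cd_mult mu gam (Suc (Suc k)) a (cd_join (Suc k) x y2) \<longrightarrow> a = (\<lambda>i. 0)) \<and>
    (cd_mult mu gam (Suc (Suc k)) (cd_join (Suc k) x y1) a = cd_mult mu gam (Suc (Suc k)) (cd_join (Suc k) x y2) a \<longrightarrow> a = (\<lambda>i. 0))"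
proof -
  obtain a1 a2 where a12: "a = cd_join (Suc k) a1 a2" and ac: "a1 \<in> cd_carrier (Suc k)" "a2 \<in> cd_carrier (Suc k)"
    using a split_SS by blast
  have xk: "x \<in> cd_carrier (Suc k)" and yk: "y1 \<in> cd_carrier (Suc k)" "y2 \<in> cd_carrier (Suc k)"
    using x y carrier1_Suc by blast+
  have cy: "cd_conj (Suc k) y1 = cd_conj (Suc 0) y1" "cd_conj (Suc k) y2 = cd_conj (Suc 0) y2"
    using conj_emb y by blast+
  have cyc: "cd_conj (Suc 0) y1 \<in> cd_carrier (Suc 0)" "cd_conj (Suc 0) y2 \<in> cd_carrier (Suc 0)" by (rule conj_carrier)+
  have ncy: "nrm1 mu (\<lambda>i. cd_conj (Suc 0) y1 i - cd_conj (Suc 0) y2 i) \<noteq> 0"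
    using n nrm1_conj[of mu "\<lambda>i. y1 i - y2 i"] conj_diff[of "Suc 0" y1 y2] by simp
  have a0: "a = (\<lambda>i. 0)" if "a1 = (\<lambda>i. 0)" "a2 = (\<lambda>i. 0)"
    using that a12 join_zero[of "\<lambda>i. 0" "Suc (Suc k)"] by (simp add: join_zero)
  show ?thesis
  proof (intro conjI impI)
    assume h: "cd_mult mu gam (Suc (Suc k)) a (cd_join (Suc k) x y1) = cd_mult mu gam (Suc (Suc k)) a (cd_join (Suc k) x y2)"
    then have h2: "cd_join (Suc k) (\<lambda>i. cd_mult mu gam (Suc k) a1 x i + gam (Suc k) * cd_mult mu gam (Suc k) (cd_conj (Suc k) y1) a2 i)
          (\<lambda>i. cd_mult mu gam (Suc k) y1 a1 i + cd_mult mu gam (Suc k) a2 (cd_conj (Suc k) x) i) =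
        cd_join (Suc k) (\<lambda>i. cd_mult mu gam (Suc k) a1 x i + gam (Suc k) * cd_mult mu gam (Suc k) (cd_conj (Suc k) y2) a2 i)
          (\<lambda>i. cd_mult mu gam (Suc k) y2 a1 i + cd_mult mu gam (Suc k) a2 (cd_conj (Suc k) x) i)"
      unfolding a12 by (simp add: mult_join ac xk yk)
    have e1: "cd_mult mu gam (Suc k) (cd_conj (Suc 0) y1) a2 = cd_mult mu gam (Suc k) (cd_conj (Suc 0) y2) a2"
      using cancel_g[OF conjunct1[OF iffD1[OF join_eq_iff h2]] g] cy by (simp add: mult_carrier)
    have e2: "cd_mult mu gam (Suc k) y1 a1 = cd_mult mu gam (Suc k) y2 a1"
      using cancel_right[OF conjunct2[OF iffD1[OF join_eq_iff h2]]] by (simp add: mult_carrier)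
    show "a = (\<lambda>i. 0)"
      using a0 e1 e2 ZD2[OF cyc ncy ac(2), of gam] ZD2[OF y n ac(1), of gam] by blast
  next
    assume h: "cd_mult mu gam (Suc (Suc k)) (cd_join (Suc k) x y1) a = cd_mult mu gam (Suc (Suc k)) (cd_join (Suc k) x y2) a"
    then have h2: "cd_join (Suc k) (\<lambda>i. cd_mult mu gam (Suc k) x a1 i + gam (Suc k) * cd_mult mu gam (Suc k) (cd_conj (Suc k) a2) y1 i)
          (\<lambda>i. cd_mult mu gam (Suc k) a2 x i + cd_mult mu gam (Suc k) y1 (cd_conj (Suc k) a1) i) =
        cd_join (Suc k) (\<lambda>i. cd_mult mu gam (Suc k) x a1 i + gam (Suc k) * cd_mult mu gam (Suc k) (cd_conj (Suc k) a2) y2 i)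
          (\<lambda>i. cd_mult mu gam (Suc k) a2 x i + cd_mult mu gam (Suc k) y2 (cd_conj (Suc k) a1) i)"
      unfolding a12 by (simp add: mult_join ac xk yk)
    have e1: "cd_mult mu gam (Suc k) (cd_conj (Suc k) a2) y1 = cd_mult mu gam (Suc k) (cd_conj (Suc k) a2) y2"
      using cancel_g[OF conjunct1[OF iffD1[OF join_eq_iff h2]] g] by (simp add: mult_carrier)
    have e2: "cd_mult mu gam (Suc k) y1 (cd_conj (Suc k) a1) = cd_mult mu gam (Suc k) y2 (cd_conj (Suc k) a1)"
      using cancel_left[OF conjunct2[OF iffD1[OF join_eq_iff h2]]] by (simp add: mult_carrier)
    have "cd_conj (Suc k) a2 = (\<lambda>i. 0)" using e1 ZD2[OF y n conj_carrier[of k a2], of gam] by blast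
    moreover have "cd_conj (Suc k) a1 = (\<lambda>i. 0)" using e2 ZD2[OF y n conj_carrier[of k a1], of gam] by blast
    ultimately show "a = (\<lambda>i. 0)" using a0 conj_zero_iff ac by blast
  qed
qed


definition sph :: "'a::field \<Rightarrow> (nat \<Rightarrow> 'a) \<Rightarrow> nat \<Rightarrow> 'a cd \<Rightarrow> 'a cd set" where
  "sph mu gam k l = {r. r \<in> cd_carrier k \<and> cd_tr k r = cd_tr k l \<and> cd_norm mu gam k r = cd_norm mu gam k l}"

definition pr :: "'a::zero \<Rightarrow> 'a \<Rightarrow> 'a cd" where
  "pr u v = (\<lambda>i. if i = 0 then u else if i = 1 then v else 0)"

lemma pr_carrier[simp]: "pr u v \<in> cd_carrier (Suc 0)"
  by (simp add: pr_def cd_carrier_def)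
lemma pr_const: "cd_const s = pr s 0"
  by (simp add: pr_def cd_const_def fun_eq_iff)
lemma pr_diff: "(\<lambda>i. pr u v i - pr u' v' i) = pr (u - u') (v - (v'::'a::field))"
  by (simp add: pr_def fun_eq_iff)
lemma nrm1_pr: "nrm1 mu (pr u v) = u * u + u * v - mu * (v * v)"
  by (simp add: nrm1_def pr_def)
lemma pr_0[simp]: "pr u v 0 = u" and pr_1[simp]: "pr u v (Suc 0) = v"
  by (simp_all add: pr_def)

lemma scalar_iff: "x \<in> range cd_const \<longleftrightarrow> (\<forall>i. i \<noteq> 0 \<longrightarrow> x i = 0)"
proof
  assume "x \<in> range cd_const" then show "\<forall>i. i \<noteq> 0 \<longrightarrow> x i = 0" by (auto simp: cd_const_def)
next
  assume h: "\<forall>i. i \<noteq> 0 \<longrightarrow> x i = 0"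
  have "x = cd_const (x 0)" using h by (auto simp: cd_const_def fun_eq_iff)
  then show "x \<in> range cd_const" by blast
qed

lemma join_scalar:
  assumes "a \<in> cd_carrier (Suc k)" "b \<in> cd_carrier (Suc k)"
  shows "cd_join (Suc k) a b \<in> range cd_const \<longleftrightarrow> a \<in> range cd_const \<and> b = (\<lambda>i. 0)"
proof
  assume h: "cd_join (Suc k) a b \<in> range cd_const"
  have h': "\<And>i. i \<noteq> 0 \<Longrightarrow> cd_join (Suc k) a b i = 0" using h scalar_iff by blast
  have "a i = 0" if "i \<noteq> 0" for i
  proof (cases "i < 2 ^ Suc k")
    case True then show ?thesis using h'[OF that] by (simp add: cd_join_def)
  next
    case False then show ?thesis using assms(1) by (simp add: cd_carrier_def)
  qed
  moreover have "b i = 0" for i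
  proof (cases "i < 2 ^ Suc k")
    case True
    have "i + 2 ^ Suc k \<noteq> 0" by simp
    then show ?thesis using h'[of "i + 2 ^ Suc k"] True by (simp add: cd_join_def)
  next
    case False then show ?thesis using assms(2) by (simp add: cd_carrier_def)
  qed
  ultimately show "a \<in> range cd_const \<and> b = (\<lambda>i. 0)" using scalar_iff by (auto simp: fun_eq_iff)
next
  assume h: "a \<in> range cd_const \<and> b = (\<lambda>i. 0)"
  then show "cd_join (Suc k) a b \<in> range cd_const"
    using join_const by (metis image_iff)
qed

lemma conj_scalar: "x \<in> cd_carrier (Suc k) \<Longrightarrow> cd_conj (Suc k) (x::'a::field cd) \<in> range cd_const \<Longrightarrow> x \<in> range cd_const"
  by (metis conj_conj conj_const image_iff)

lemma tr_conj: "x \<in> cd_carrier (Suc k) \<Longrightarrow> cd_tr (Suc k) (cd_conj (Suc k) x) = cd_tr (Suc k) (x::'a::field cd)"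
  by (simp add: cd_tr_def cd_add_def conj_conj)

lemma norm_conj: "x \<in> cd_carrier (Suc k) \<Longrightarrow> cd_norm mu gam (Suc k) (cd_conj (Suc k) x) = cd_norm mu gam (Suc k) (x::'a::field cd)"
proof -
  assume x: "x \<in> cd_carrier (Suc k)"
  have "cd_norm mu gam (Suc k) (cd_conj (Suc k) x) = cd_mult mu gam (Suc k) x (cd_conj (Suc k) x) 0"
    unfolding cd_norm_def using x by (simp add: conj_conj)
  also have "\<dots> = cd_norm mu gam (Suc k) x" using norm_props[OF x, of mu gam] by (simp add: cd_const_def)
  finally show ?thesis .
qed

lemma sph_conj: "c \<in> cd_carrier (Suc k) \<Longrightarrow> x \<in> sph mu gam (Suc k) (cd_conj (Suc k) c) \<Longrightarrow>
   cd_conj (Suc k) x \<in> sph mu gam (Suc k) (c::'a::field cd)"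
  by (simp add: sph_def tr_conj norm_conj)

lemma sph_join1: "x \<in> sph mu gam (Suc k) c \<Longrightarrow> c \<in> cd_carrier (Suc k) \<Longrightarrow> d \<in> cd_carrier (Suc k) \<Longrightarrow>
  cd_join (Suc k) x d \<in> sph mu gam (Suc (Suc k)) (cd_join (Suc k) c (d::'a::field cd))"
  by (simp add: sph_def tr_join norm_join)

lemma sph_join2: "y \<in> sph mu gam (Suc k) d \<Longrightarrow> c \<in> cd_carrier (Suc k) \<Longrightarrow> d \<in> cd_carrier (Suc k) \<Longrightarrow>
  cd_join (Suc k) c y \<in> sph mu gam (Suc (Suc k)) (cd_join (Suc k) c (d::'a::field cd))"
  by (simp add: sph_def tr_join norm_join)

lemma tr_join1: "x \<in> cd_carrier (Suc 0) \<Longrightarrow> y \<in> cd_carrier (Suc 0) \<Longrightarrow>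
  cd_tr (Suc (Suc k)) (cd_join (Suc k) x (y::'a::field cd)) = 2 * x 0 + x 1"
  using tr_join[of x k y] tr_emb[of x k] carrier1_Suc by metis

lemma norm_join1: "x \<in> cd_carrier (Suc 0) \<Longrightarrow> y \<in> cd_carrier (Suc 0) \<Longrightarrow>
  cd_norm mu gam (Suc (Suc k)) (cd_join (Suc k) x (y::'a::field cd)) = nrm1 mu x - gam (Suc k) * nrm1 mu y"
  using norm_join[of x k y mu gam] norm_emb[of x mu gam k] norm_emb[of y mu gam k] carrier1_Suc by metis


lemma KL:
  fixes l a :: "'a::field cd"
  assumes mu: "4 * mu + 1 \<noteq> 0"
  shows "(\<forall>j. 1 \<le> j \<and> j \<le> k \<longrightarrow> gam j \<noteq> 0) \<Longrightarrow> l \<in> cd_carrier (Suc k) \<Longrightarrow> l \<notin> range cd_const \<Longrightarrow>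
    a \<in> cd_carrier (Suc k) \<Longrightarrow>
    ((\<forall>r \<in> sph mu gam (Suc k) l. cd_mult mu gam (Suc k) a r = cd_mult mu gam (Suc k) a l) \<longrightarrow> a = (\<lambda>i. 0)) \<and>
    ((\<forall>r \<in> sph mu gam (Suc k) l. cd_mult mu gam (Suc k) r a = cd_mult mu gam (Suc k) l a) \<longrightarrow> a = (\<lambda>i. 0))"
proof (induction k arbitrary: l a)
  case 0
  have l1: "l 1 \<noteq> 0"
  proof -
    obtain i where i: "i \<noteq> 0" "l i \<noteq> 0" using 0(3) scalar_iff by blast
    have "i < 2" using i 0(2) by (simp add: cd_carrier_def) (meson not_le)
    then have "i = 1" using i by simp
    then show ?thesis using i by simp
  qed
  have r: "cd_conj (Suc 0) l \<in> sph mu gam (Suc 0) l"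
    using 0(2) by (simp add: sph_def tr_conj norm_conj del: cd_conj.simps)
  have c1: "cd_conj (Suc 0) l \<in> cd_carrier (Suc 0)" by (rule conj_carrier)
  have "nrm1 mu (\<lambda>i. cd_conj (Suc 0) l i - l i) = - ((4 * mu + 1) * (l 1 * l 1))"
    by (simp add: nrm1_def algebra_simps)
  also have "\<dots> \<noteq> 0" using mu l1 by simp
  finally have n: "nrm1 mu (\<lambda>i. cd_conj (Suc 0) l i - l i) \<noteq> 0" .
  show ?case using ZD2[OF c1 0(2) n 0(4), of gam] r by metis
next
  case (Suc k)
  have gk: "\<forall>j. 1 \<le> j \<and> j \<le> k \<longrightarrow> gam j \<noteq> 0" using Suc.prems(1) by simp
  have g: "gam (Suc k) \<noteq> 0" using Suc.prems(1) by simp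
  note IH = Suc.IH[OF gk]
  obtain c d where l: "l = cd_join (Suc k) c d" and cd: "c \<in> cd_carrier (Suc k)" "d \<in> cd_carrier (Suc k)"
    using Suc.prems(2) split_SS by blast
  obtain a1 a2 where a: "a = cd_join (Suc k) a1 a2" and ac: "a1 \<in> cd_carrier (Suc k)" "a2 \<in> cd_carrier (Suc k)"
    using Suc.prems(4) split_SS by blast
  have a0: "a = (\<lambda>i. 0)" if "a1 = (\<lambda>i. 0)" "a2 = (\<lambda>i. 0)"
    using that a join_zero[of "\<lambda>i. 0" "Suc (Suc k)"] by (simp add: join_zero)
  let ?M = "cd_mult mu gam (Suc k)" and ?C = "cd_conj (Suc k)" and ?g = "gam (Suc k)"
  let ?MM = "cd_mult mu gam (Suc (Suc k))"
  have ccar: "?C c \<in> cd_carrier (Suc k)" "?C d \<in> cd_carrier (Suc k)" by simp_all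
  have ns: "\<not> (c \<in> range cd_const \<and> d = (\<lambda>i. 0))" using Suc.prems(3) l join_scalar[OF cd] by blast
  consider (i) "c \<notin> range cd_const" | (ii) "c \<in> range cd_const" "d \<notin> range cd_const"
    | (iii) "c \<in> range cd_const" "d \<in> range cd_const" by blast
  then show ?case
  proof cases
    case i
    have cc: "?C c \<notin> range cd_const" using i conj_scalar cd by blast
    show ?thesis
    proof (intro conjI impI)
      assume H: "\<forall>r\<in>sph mu gam (Suc (Suc k)) l. ?MM a r = ?MM a l"
      have E: "?M a1 x = ?M a1 c \<and> ?M a2 (?C x) = ?M a2 (?C c)" if x: "x \<in> sph mu gam (Suc k) c" for x
      proof -
        have xc: "x \<in> cd_carrier (Suc k)" using x by (simp add: sph_def)
        have "?MM a (cd_join (Suc k) x d) = ?MM a l" using H sph_join1[OF x cd] l by blast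
        then have "cd_join (Suc k) (\<lambda>i. ?M a1 x i + ?g * ?M (?C d) a2 i) (\<lambda>i. ?M d a1 i + ?M a2 (?C x) i) =
                   cd_join (Suc k) (\<lambda>i. ?M a1 c i + ?g * ?M (?C d) a2 i) (\<lambda>i. ?M d a1 i + ?M a2 (?C c) i)"
          unfolding a l by (simp add: mult_join ac cd xc)
        then have P: "(\<lambda>i. ?M a1 x i + ?g * ?M (?C d) a2 i) = (\<lambda>i. ?M a1 c i + ?g * ?M (?C d) a2 i) \<and>
                   (\<lambda>i. ?M d a1 i + ?M a2 (?C x) i) = (\<lambda>i. ?M d a1 i + ?M a2 (?C c) i)"
          by (subst (asm) join_eq_iff) simp_all
        show ?thesis using cancel_right[OF P[THEN conjunct1]] cancel_left[OF P[THEN conjunct2]] by simp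
      qed
      have "a1 = (\<lambda>i. 0)" using IH[OF cd(1) i ac(1)] E by blast
      moreover have "a2 = (\<lambda>i. 0)"
      proof -
        have "\<forall>x'\<in>sph mu gam (Suc k) (?C c). ?M a2 x' = ?M a2 (?C c)"
        proof
          fix x' assume x': "x' \<in> sph mu gam (Suc k) (?C c)"
          have "?C x' \<in> sph mu gam (Suc k) c" using sph_conj[OF cd(1) x'] .
          moreover have "?C (?C x') = x'" using x' by (simp add: sph_def conj_conj)
          ultimately show "?M a2 x' = ?M a2 (?C c)" using E by metis
        qed
        then show ?thesis using IH[OF ccar(1) cc ac(2)] by blast
      qed
      ultimately show "a = (\<lambda>i. 0)" using a0 by blast
    next
      assume H: "\<forall>r\<in>sph mu gam (Suc (Suc k)) l. ?MM r a = ?MM l a"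
      have E: "?M x a1 = ?M c a1 \<and> ?M a2 x = ?M a2 c" if x: "x \<in> sph mu gam (Suc k) c" for x
      proof -
        have xc: "x \<in> cd_carrier (Suc k)" using x by (simp add: sph_def)
        have "?MM (cd_join (Suc k) x d) a = ?MM l a" using H sph_join1[OF x cd] l by blast
        then have "cd_join (Suc k) (\<lambda>i. ?M x a1 i + ?g * ?M (?C a2) d i) (\<lambda>i. ?M a2 x i + ?M d (?C a1) i) =
                   cd_join (Suc k) (\<lambda>i. ?M c a1 i + ?g * ?M (?C a2) d i) (\<lambda>i. ?M a2 c i + ?M d (?C a1) i)"
          unfolding a l by (simp add: mult_join ac cd xc)
        then have P: "(\<lambda>i. ?M x a1 i + ?g * ?M (?C a2) d i) = (\<lambda>i. ?M c a1 i + ?g * ?M (?C a2) d i) \<and>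
                   (\<lambda>i. ?M a2 x i + ?M d (?C a1) i) = (\<lambda>i. ?M a2 c i + ?M d (?C a1) i)"
          by (subst (asm) join_eq_iff) simp_all
        show ?thesis using cancel_right[OF P[THEN conjunct1]] cancel_right[OF P[THEN conjunct2]] by simp
      qed
      have "a1 = (\<lambda>i. 0)" using IH[OF cd(1) i ac(1)] E by blast
      moreover have "a2 = (\<lambda>i. 0)" using IH[OF cd(1) i ac(2)] E by blast
      ultimately show "a = (\<lambda>i. 0)" using a0 by blast
    qed
  next
    case ii
    have dd: "?C d \<notin> range cd_const" using ii conj_scalar cd by blast
    show ?thesis
    proof (intro conjI impI)
      assume H: "\<forall>r\<in>sph mu gam (Suc (Suc k)) l. ?MM a r = ?MM a l"
      have E: "?M y a1 = ?M d a1 \<and> ?M (?C y) a2 = ?M (?C d) a2" if y: "y \<in> sph mu gam (Suc k) d" for y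
      proof -
        have yc: "y \<in> cd_carrier (Suc k)" using y by (simp add: sph_def)
        have "?MM a (cd_join (Suc k) c y) = ?MM a l" using H sph_join2[OF y cd] l by blast
        then have "cd_join (Suc k) (\<lambda>i. ?M a1 c i + ?g * ?M (?C y) a2 i) (\<lambda>i. ?M y a1 i + ?M a2 (?C c) i) =
                   cd_join (Suc k) (\<lambda>i. ?M a1 c i + ?g * ?M (?C d) a2 i) (\<lambda>i. ?M d a1 i + ?M a2 (?C c) i)"
          unfolding a l by (simp add: mult_join ac cd yc)
        then have P: "(\<lambda>i. ?M a1 c i + ?g * ?M (?C y) a2 i) = (\<lambda>i. ?M a1 c i + ?g * ?M (?C d) a2 i) \<and>
                   (\<lambda>i. ?M y a1 i + ?M a2 (?C c) i) = (\<lambda>i. ?M d a1 i + ?M a2 (?C c) i)"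
          by (subst (asm) join_eq_iff) simp_all
        show ?thesis using cancel_g[OF P[THEN conjunct1] g] cancel_right[OF P[THEN conjunct2]] by simp
      qed
      have "a1 = (\<lambda>i. 0)" using IH[OF cd(2) ii(2) ac(1)] E by blast
      moreover have "a2 = (\<lambda>i. 0)"
      proof -
        have "\<forall>y'\<in>sph mu gam (Suc k) (?C d). ?M y' a2 = ?M (?C d) a2"
        proof
          fix y' assume y': "y' \<in> sph mu gam (Suc k) (?C d)"
          have "?C y' \<in> sph mu gam (Suc k) d" using sph_conj[OF cd(2) y'] .
          moreover have "?C (?C y') = y'" using y' by (simp add: sph_def conj_conj)
          ultimately show "?M y' a2 = ?M (?C d) a2" using E by metis
        qed
        then show ?thesis using IH[OF ccar(2) dd ac(2)] by blast
      qed
      ultimately show "a = (\<lambda>i. 0)" using a0 by blast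
    next
      assume H: "\<forall>r\<in>sph mu gam (Suc (Suc k)) l. ?MM r a = ?MM l a"
      have E: "?M (?C a2) y = ?M (?C a2) d \<and> ?M y (?C a1) = ?M d (?C a1)" if y: "y \<in> sph mu gam (Suc k) d" for y
      proof -
        have yc: "y \<in> cd_carrier (Suc k)" using y by (simp add: sph_def)
        have "?MM (cd_join (Suc k) c y) a = ?MM l a" using H sph_join2[OF y cd] l by blast
        then have "cd_join (Suc k) (\<lambda>i. ?M c a1 i + ?g * ?M (?C a2) y i) (\<lambda>i. ?M a2 c i + ?M y (?C a1) i) =
                   cd_join (Suc k) (\<lambda>i. ?M c a1 i + ?g * ?M (?C a2) d i) (\<lambda>i. ?M a2 c i + ?M d (?C a1) i)"
          unfolding a l by (simp add: mult_join ac cd yc)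
        then have P: "(\<lambda>i. ?M c a1 i + ?g * ?M (?C a2) y i) = (\<lambda>i. ?M c a1 i + ?g * ?M (?C a2) d i) \<and>
                   (\<lambda>i. ?M a2 c i + ?M y (?C a1) i) = (\<lambda>i. ?M a2 c i + ?M d (?C a1) i)"
          by (subst (asm) join_eq_iff) simp_all
        show ?thesis using cancel_g[OF P[THEN conjunct1] g] cancel_left[OF P[THEN conjunct2]] by simp
      qed
      have "?C a2 = (\<lambda>i. 0)" using IH[OF cd(2) ii(2) conj_carrier[of k a2]] E by blast
      moreover have "?C a1 = (\<lambda>i. 0)" using IH[OF cd(2) ii(2) conj_carrier[of k a1]] E by blast
      ultimately show "a = (\<lambda>i. 0)" using a0 conj_zero_iff ac by blast
    qed
  next
    case iii
    obtain s where s: "c = cd_const s" using iii by blast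
    obtain \<delta> where dl: "d = cd_const \<delta>" using iii by blast
    have dn: "\<delta> \<noteq> 0" using ns iii dl by (auto simp: cd_const_def fun_eq_iff)
    have l': "l = cd_join (Suc k) (pr s 0) (pr \<delta> 0)" using l s dl by (simp add: pr_const)
    have trl: "cd_tr (Suc (Suc k)) l = 2 * s" unfolding l' by (simp add: tr_join1)
    have nl: "cd_norm mu gam (Suc (Suc k)) l = s * s - ?g * (\<delta> * \<delta>)" unfolding l' by (simp add: norm_join1 nrm1_pr)
    have mem: "cd_join (Suc k) x y \<in> sph mu gam (Suc (Suc k)) l"
      if "x \<in> cd_carrier (Suc 0)" "y \<in> cd_carrier (Suc 0)" "2 * x 0 + x 1 = 2 * s"
        "nrm1 mu x - ?g * nrm1 mu y = s * s - ?g * (\<delta> * \<delta>)" for x y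
      using that by (simp add: sph_def trl nl tr_join1 norm_join1)
    have key: "?thesis" if "x \<in> cd_carrier (Suc 0)" "y1 \<in> cd_carrier (Suc 0)" "y2 \<in> cd_carrier (Suc 0)"
      "cd_join (Suc k) x y1 \<in> sph mu gam (Suc (Suc k)) l" "cd_join (Suc k) x y2 \<in> sph mu gam (Suc (Suc k)) l"
      "nrm1 mu (\<lambda>i. y1 i - y2 i) \<noteq> 0" for x y1 y2
    proof -
      note P = pairY[where x=x and ?y1.0=y1 and ?y2.0=y2 and mu=mu and a=a and k=k and gam=gam, OF that(1,2,3,6) Suc.prems(4) g]
      show ?thesis
      proof (intro conjI impI)
        assume H: "\<forall>r\<in>sph mu gam (Suc (Suc k)) l. ?MM a r = ?MM a l"
        then have "?MM a (cd_join (Suc k) x y1) = ?MM a (cd_join (Suc k) x y2)" using that(4,5) by metis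
        then show "a = (\<lambda>i. 0)" using P by blast
      next
        assume H: "\<forall>r\<in>sph mu gam (Suc (Suc k)) l. ?MM r a = ?MM l a"
        then have "?MM (cd_join (Suc k) x y1) a = ?MM (cd_join (Suc k) x y2) a" using that(4,5) by metis
        then show "a = (\<lambda>i. 0)" using P by blast
      qed
    qed
    show ?thesis
    proof (cases "mu = 0")
      case False
      have m1: "cd_join (Suc k) (pr s 0) (pr \<delta> 0) \<in> sph mu gam (Suc (Suc k)) l"
        by (rule mem) (simp_all add: nrm1_pr)
      have m2: "cd_join (Suc k) (pr s 0) (pr \<delta> (\<delta> / mu)) \<in> sph mu gam (Suc (Suc k)) l"
        by (rule mem) (use False in \<open>simp_all add: nrm1_pr field_simps\<close>)
      have "nrm1 mu (\<lambda>i. pr \<delta> 0 i - pr \<delta> (\<delta> / mu) i) = - (\<delta> * \<delta> / mu)"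
        using False by (simp add: pr_diff nrm1_pr field_simps)
      also have "\<dots> \<noteq> 0" using False dn by simp
      finally show ?thesis using key[OF pr_carrier pr_carrier pr_carrier m1 m2] by blast
    next
      case True
      show ?thesis
      proof (cases "\<exists>\<alpha>. \<alpha> \<noteq> 0 \<and> \<alpha> \<noteq> \<delta>")
        case True
        then obtain \<alpha> where al: "\<alpha> \<noteq> 0" "\<alpha> \<noteq> \<delta>" by blast
        have m1: "cd_join (Suc k) (pr s 0) (pr \<delta> 0) \<in> sph mu gam (Suc (Suc k)) l"
          by (rule mem) (simp_all add: nrm1_pr)
        have m2: "cd_join (Suc k) (pr s 0) (pr \<alpha> (\<delta> * \<delta> / \<alpha> - \<alpha>)) \<in> sph mu gam (Suc (Suc k)) l"
          by (rule mem) (use \<open>mu = 0\<close> al in \<open>simp_all add: nrm1_pr field_simps\<close>)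
        have "nrm1 mu (\<lambda>i. pr \<delta> 0 i - pr \<alpha> (\<delta> * \<delta> / \<alpha> - \<alpha>) i) = - (\<delta> * (\<delta> - \<alpha>) * (\<delta> - \<alpha>)) / \<alpha>"
          using \<open>mu = 0\<close> al by (simp add: pr_diff nrm1_pr field_simps)
        also have "\<dots> \<noteq> 0" using al dn by simp
        finally show ?thesis using key[OF pr_carrier pr_carrier pr_carrier m1 m2] by blast
      next
        case False
        then have F: "\<And>\<alpha>. \<alpha> = 0 \<or> \<alpha> = \<delta>" by blast
        have d1: "\<delta> = 1" using F[of 1] by simp
        have two: "(2::'a) = 0"
        proof -
          have "(1::'a) + 1 = 0 \<or> (1::'a) + 1 = 1" using F[of "1 + 1"] d1 by simp
          moreover have "(1::'a) + 1 \<noteq> 1" by (metis add.right_neutral add_left_cancel zero_neq_one)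
          ultimately show ?thesis by (simp add: one_add_one)
        qed
        have g1: "?g = 1" using F[of ?g] d1 g by simp
        have sq: "(s + 1) * (s + 1) = s * s - 1"
        proof -
          have "(s + 1) * (s + 1) - (s * s - 1) = 2 * (s + 1)" by (simp add: algebra_simps)
          then show ?thesis using two by simp
        qed
        have m1: "cd_join (Suc k) (pr (s + 1) 0) (pr 0 1) \<in> sph mu gam (Suc (Suc k)) l"
          by (rule mem) (use \<open>mu = 0\<close> two g1 d1 sq in \<open>simp_all add: nrm1_pr algebra_simps\<close>)
        have m2: "cd_join (Suc k) (pr (s + 1) 0) (pr 1 1) \<in> sph mu gam (Suc (Suc k)) l"
          by (rule mem) (use \<open>mu = 0\<close> two g1 d1 sq in \<open>simp_all add: nrm1_pr algebra_simps\<close>)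
        have "nrm1 mu (\<lambda>i. pr 0 1 i - pr 1 1 i) = (1::'a)"
          using \<open>mu = 0\<close> by (simp add: pr_diff nrm1_pr)
        then have "nrm1 mu (\<lambda>i. pr 0 1 i - pr 1 1 i) \<noteq> (0::'a)" by simp
        then show ?thesis using key[OF pr_carrier pr_carrier pr_carrier m1 m2] by blast
      qed
    qed
  qed
qed



definition supp :: "(nat \<Rightarrow> 'a::zero cd) \<Rightarrow> nat set" where
  "supp f = {k. f k \<noteq> (\<lambda>i. 0)}"

fun uv :: "'a::field \<Rightarrow> 'a \<Rightarrow> nat \<Rightarrow> 'a \<times> 'a" where
  "uv t N 0 = (1, 0)"
| "uv t N (Suc m) = (- N * snd (uv t N m), fst (uv t N m) + t * snd (uv t N m))"

definition Fp :: "(nat \<Rightarrow> 'a::field cd) \<Rightarrow> nat \<Rightarrow> 'a poly" where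
  "Fp f i = (\<Sum>k\<in>supp f. monom (f k i) k)"

definition Ucf :: "'a::field \<Rightarrow> 'a \<Rightarrow> (nat \<Rightarrow> 'a cd) \<Rightarrow> 'a cd" where
  "Ucf t N f = (\<lambda>i. \<Sum>k\<in>supp f. fst (uv t N k) * f k i)"
definition Vcf :: "'a::field \<Rightarrow> 'a \<Rightarrow> (nat \<Rightarrow> 'a cd) \<Rightarrow> 'a cd" where
  "Vcf t N f = (\<lambda>i. \<Sum>k\<in>supp f. snd (uv t N k) * f k i)"

lemma pCons0_mult: "pCons 0 (q::'a::field poly) = [:0, 1:] * q"
  by simp

lemma coeff_pair: "coeff [:a, b:] j = (if j = 0 then a else if j = 1 then b else 0)"
  by (cases j; cases "j - 1") (simp_all add: coeff_pCons)

lemma coeff_triple: "coeff [:a, b, c:] j = (if j = 0 then a else if j = 1 then b else if j = 2 then c else 0)"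
proof -
  consider "j = 0" | "j = 1" | "j = 2" | "j \<ge> 3" by linarith
  then show ?thesis
  proof cases
    case 4
    then have "j = Suc (Suc (Suc (j - 3)))" by simp
    then obtain q where "j = Suc (Suc (Suc q))" by blast
    then show ?thesis by simp
  qed (simp_all add: numeral_2_eq_2)
qed

lemma coeff_pCons0: "coeff (pCons 0 q) j = (if j = 0 then 0 else coeff q (j - 1))"
  by (cases j) simp_all

lemma monom_uv_dvd: "[:N, -t, 1:] dvd (monom 1 m - [:fst (uv t N m), snd (uv t N m):])"
proof (induction m)
  case 0 then show ?case by (simp add: monom_0)
next
  case (Suc m)
  let ?u = "fst (uv t N m)" and ?v = "snd (uv t N m)"
  have eq: "monom 1 (Suc m) - [:fst (uv t N (Suc m)), snd (uv t N (Suc m)):] =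
     pCons 0 (monom 1 m - [:?u, ?v:]) + smult ?v [:N, -t, 1:]"
  proof (rule poly_eqI)
    fix j :: nat
    consider "j = 0" | "j = 1" | "j = 2" | "j \<ge> 3" by linarith
    then show "coeff (monom 1 (Suc m) - [:fst (uv t N (Suc m)), snd (uv t N (Suc m)):]) j =
       coeff (pCons 0 (monom 1 m - [:?u, ?v:]) + smult ?v [:N, -t, 1:]) j"
    proof cases
      case 1 then show ?thesis by (simp only: coeff_diff coeff_add coeff_smult coeff_pCons0 coeff_pair coeff_triple coeff_monom) simp
    next
      case 2 then show ?thesis by (simp only: coeff_diff coeff_add coeff_smult coeff_pCons0 coeff_pair coeff_triple coeff_monom) (simp add: algebra_simps)
    next
      case 3 then show ?thesis by (simp only: coeff_diff coeff_add coeff_smult coeff_pCons0 coeff_pair coeff_triple coeff_monom) simp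
    next
      case 4 then show ?thesis by (simp only: coeff_diff coeff_add coeff_smult coeff_pCons0 coeff_pair coeff_triple coeff_monom) (auto split: if_split_asm)
    qed
  qed
  have "[:N, -t, 1:] dvd [:0, 1:] * (monom 1 m - [:?u, ?v:])" by (rule dvd_mult[OF Suc.IH])
  then have "[:N, -t, 1:] dvd pCons 0 (monom 1 m - [:?u, ?v:])"
    by (subst pCons0_mult)
  then show ?case unfolding eq
    by (intro dvd_add dvd_smult dvd_refl)
qed

lemma supp_finite: "cd_is_poly n f \<Longrightarrow> finite (supp f)"
  by (simp add: cd_is_poly_def supp_def)

lemma coeff_Fp: "cd_is_poly n f \<Longrightarrow> coeff (Fp f i) m = f m i"
proof -
  assume f: "cd_is_poly n f"
  have "coeff (Fp f i) m = (\<Sum>k\<in>supp f. if k = m then f k i else 0)"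
    by (simp add: Fp_def coeff_sum)
  also have "\<dots> = (if m \<in> supp f then f m i else 0)"
    using supp_finite[OF f] by (simp add: sum.delta')
  also have "\<dots> = f m i" by (auto simp: supp_def)
  finally show ?thesis .
qed


lemma sum_pair: "(\<Sum>k\<in>K. smult (c k) [:a k, b k:]) = [:\<Sum>k\<in>K. a k * c k, \<Sum>k\<in>K. b k * (c k::'a::field):]"
proof (rule poly_eqI)
  fix j :: nat
  show "coeff (\<Sum>k\<in>K. smult (c k) [:a k, b k:]) j = coeff [:\<Sum>k\<in>K. a k * c k, \<Sum>k\<in>K. b k * c k:] j"
    by (simp only: coeff_sum coeff_smult coeff_pair) (simp add: mult.commute)
qed

lemma Fp_uv_dvd:
  assumes f: "cd_is_poly n f"
  shows "[:N, -t, 1:] dvd (Fp f i - [:Ucf t N f i, Vcf t N f i:])"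
proof -
  have "(\<Sum>k\<in>supp f. smult (f k i) (monom 1 k - [:fst (uv t N k), snd (uv t N k):])) =
     (\<Sum>k\<in>supp f. smult (f k i) (monom 1 k)) - (\<Sum>k\<in>supp f. smult (f k i) [:fst (uv t N k), snd (uv t N k):])"
    by (simp add: smult_diff_right sum_subtractf)
  also have "(\<Sum>k\<in>supp f. smult (f k i) (monom 1 k)) = Fp f i"
    by (simp add: Fp_def smult_monom)
  also have "(\<Sum>k\<in>supp f. smult (f k i) [:fst (uv t N k), snd (uv t N k):]) = [:Ucf t N f i, Vcf t N f i:]"
    by (simp only: sum_pair Ucf_def Vcf_def)
  finally have eq: "Fp f i - [:Ucf t N f i, Vcf t N f i:] =
      (\<Sum>k\<in>supp f. smult (f k i) (monom 1 k - [:fst (uv t N k), snd (uv t N k):]))" by simp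
  show ?thesis unfolding eq
    by (intro dvd_sum dvd_smult monom_uv_dvd)
qed


lemma mult_sum1: "finite K \<Longrightarrow> cd_mult mu gam n (\<lambda>i. \<Sum>k\<in>K. c k * x k i) z =
   (\<lambda>i. \<Sum>k\<in>K. (c k::'a::field) * cd_mult mu gam n (x k) z i)"
proof (induction K rule: finite_induct)
  case empty then show ?case by simp
next
  case (insert a K)
  have "cd_mult mu gam n (\<lambda>i. \<Sum>k\<in>insert a K. c k * x k i) z =
     cd_mult mu gam n (\<lambda>i. c a * x a i + 1 * (\<Sum>k\<in>K. c k * x k i)) z"
    using insert by simp
  also have "\<dots> = (\<lambda>i. c a * cd_mult mu gam n (x a) z i + 1 * cd_mult mu gam n (\<lambda>i. \<Sum>k\<in>K. c k * x k i) z i)"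
    by (rule mult_lin1)
  finally show ?case using insert by simp
qed

lemma const_1_mult: "cd_const N i = N * cd_const (1::'a::field) i"
  by (simp add: cd_const_def)

lemma pow_uv:
  fixes r :: "'a::field cd"
  assumes r: "r \<in> cd_carrier (Suc k)" and rr: "cd_mult mu gam (Suc k) r r = (\<lambda>i. t * r i - cd_const N i)"
  shows "cd_pow mu gam (Suc k) r m = (\<lambda>i. fst (uv t N m) * cd_const 1 i + snd (uv t N m) * r i)"
proof (induction m)
  case 0 then show ?case by simp
next
  case (Suc m)
  let ?u = "fst (uv t N m)" and ?v = "snd (uv t N m)"
  have "cd_pow mu gam (Suc k) r (Suc m) = cd_mult mu gam (Suc k) r (\<lambda>i. ?u * cd_const 1 i + ?v * r i)"
    using Suc by simp
  also have "\<dots> = (\<lambda>i. ?u * cd_mult mu gam (Suc k) r (cd_const 1) i + ?v * cd_mult mu gam (Suc k) r r i)"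
    by (rule mult_lin2)
  also have "\<dots> = (\<lambda>i. ?u * r i + ?v * (t * r i - cd_const N i))"
    using mult_const[OF r, of mu gam 1] rr by simp
  also have "\<dots> = (\<lambda>i. fst (uv t N (Suc m)) * cd_const 1 i + snd (uv t N (Suc m)) * r i)"
    by (auto simp: fun_eq_iff algebra_simps const_1_mult[of N])
  finally show ?case .
qed

lemma eval_supp: "cd_eval mu gam n f r = (\<lambda>i. \<Sum>k\<in>supp f. cd_mult mu gam n (f k) (cd_pow mu gam n r k) i)"
  by (simp add: cd_eval_def supp_def)

lemma poly_carrier: "cd_is_poly n f \<Longrightarrow> f k \<in> cd_carrier n"
  by (simp add: cd_is_poly_def)

lemma eval_decomp:
  fixes r :: "'a::field cd"
  assumes f: "cd_is_poly (Suc k) f" and r: "r \<in> cd_carrier (Suc k)"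
    and rr: "cd_mult mu gam (Suc k) r r = (\<lambda>i. t * r i - cd_const N i)"
  shows "cd_eval mu gam (Suc k) f r = (\<lambda>i. Ucf t N f i + cd_mult mu gam (Suc k) (Vcf t N f) r i)"
proof -
  have fin: "finite (supp f)" using supp_finite[OF f] .
  have trm: "cd_mult mu gam (Suc k) (f m) (cd_pow mu gam (Suc k) r m) =
     (\<lambda>i. fst (uv t N m) * f m i + snd (uv t N m) * cd_mult mu gam (Suc k) (f m) r i)" for m
  proof -
    have "cd_mult mu gam (Suc k) (f m) (cd_pow mu gam (Suc k) r m) =
      (\<lambda>i. fst (uv t N m) * cd_mult mu gam (Suc k) (f m) (cd_const 1) i + snd (uv t N m) * cd_mult mu gam (Suc k) (f m) r i)"
      unfolding pow_uv[OF r rr] by (rule mult_lin2)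
    then show ?thesis using mult_const[OF poly_carrier[OF f], of mu gam 1] by simp
  qed
  have "cd_eval mu gam (Suc k) f r = (\<lambda>i. \<Sum>m\<in>supp f. fst (uv t N m) * f m i + snd (uv t N m) * cd_mult mu gam (Suc k) (f m) r i)"
    unfolding eval_supp trm ..
  also have "\<dots> = (\<lambda>i. Ucf t N f i + (\<Sum>m\<in>supp f. snd (uv t N m) * cd_mult mu gam (Suc k) (f m) r i))"
    by (simp add: sum.distrib Ucf_def)
  also have "\<dots> = (\<lambda>i. Ucf t N f i + cd_mult mu gam (Suc k) (Vcf t N f) r i)"
    unfolding Vcf_def mult_sum1[OF fin] ..
  finally show ?thesis .
qed

lemma pair_dvd_zero:
  assumes "[:N, -t, 1:] dvd [:a, b::'a::field:]"
  shows "a = 0 \<and> b = 0"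
proof (rule ccontr)
  assume "\<not> (a = 0 \<and> b = 0)"
  then have nz: "[:a, b:] \<noteq> 0" by simp
  have "degree [:N, -t, 1::'a:] \<le> degree [:a, b:]" using dvd_imp_degree_le[OF assms nz] .
  moreover have "degree [:a, b:] \<le> 1" by (rule order.trans[OF degree_pCons_le]) simp
  moreover have "degree [:N, -t, 1::'a:] = 2" by simp
  ultimately show False by simp
qed

lemma Ucf_carrier: "cd_is_poly n f \<Longrightarrow> Ucf t N f \<in> cd_carrier n"
  by (auto simp: Ucf_def cd_carrier_def cd_is_poly_def)
lemma Vcf_carrier: "cd_is_poly n f \<Longrightarrow> Vcf t N f \<in> cd_carrier n"
  by (auto simp: Vcf_def cd_carrier_def cd_is_poly_def)

lemma EV0:
  fixes r :: "'a::field cd"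
  assumes f: "cd_is_poly (Suc k) f" and dv: "\<And>i. [:N, -t, 1:] dvd Fp f i"
    and r: "r \<in> cd_carrier (Suc k)" and rr: "cd_mult mu gam (Suc k) r r = (\<lambda>i. t * r i - cd_const N i)"
  shows "cd_eval mu gam (Suc k) f r = (\<lambda>i. 0)"
proof -
  have z: "Ucf t N f i = 0 \<and> Vcf t N f i = 0" for i
  proof -
    have "[:N, -t, 1:] dvd Fp f i - (Fp f i - [:Ucf t N f i, Vcf t N f i:])"
      using dv[of i] Fp_uv_dvd[OF f, of N t i] by (rule dvd_diff)
    then show ?thesis using pair_dvd_zero by simp
  qed
  then have "Vcf t N f = (\<lambda>i. 0)" by auto
  then show ?thesis using z by (simp add: eval_decomp[OF f r rr])
qed


lemma charpoly_const:
  "cd_charpoly mu gam n l q = cd_const (coeff [:cd_norm mu gam n l, - cd_tr n l, 1:] q)"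
  by (auto simp: cd_charpoly_def coeff_triple cd_const_def fun_eq_iff)

lemma charpoly_poly: "cd_is_poly n (cd_charpoly mu gam n (l::'a::field cd))"
proof -
  have "{k. cd_charpoly mu gam n l k \<noteq> (\<lambda>i. 0)} \<subseteq> {0, 1, 2}"
    by (auto simp: cd_charpoly_def)
  then have "finite {k. cd_charpoly mu gam n l k \<noteq> (\<lambda>i. 0)}" by (rule finite_subset) simp
  moreover have "cd_charpoly mu gam n l k \<in> cd_carrier n" for k
    by (simp add: charpoly_const)
  ultimately show ?thesis by (simp add: cd_is_poly_def)
qed

lemma Fp_charpoly_dvd:
  "[:cd_norm mu gam n l, - cd_tr n l, 1:] dvd Fp (cd_charpoly mu gam n (l::'a::field cd)) i"
proof -
  have "Fp (cd_charpoly mu gam n l) i = (if i = 0 then [:cd_norm mu gam n l, - cd_tr n l, 1:] else 0)"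
    by (rule poly_eqI) (simp add: coeff_Fp[OF charpoly_poly] charpoly_const cd_const_def)
  then show ?thesis by simp
qed

lemma pow_carrier: "cd_pow mu gam (Suc k) r m \<in> cd_carrier (Suc k)"
  by (cases m) simp_all

lemma eval_charpoly:
  fixes l r :: "'a::field cd"
  assumes r: "r \<in> cd_carrier (Suc k)"
  shows "cd_eval mu gam (Suc k) (cd_charpoly mu gam (Suc k) l) r =
    (\<lambda>i. cd_norm mu gam (Suc k) l * cd_const 1 i - cd_tr (Suc k) l * r i + cd_mult mu gam (Suc k) r r i)"
proof -
  let ?p = "cd_charpoly mu gam (Suc k) l"
  have sub: "supp ?p \<subseteq> {0, 1, 2}" by (auto simp: supp_def cd_charpoly_def)
  have "cd_eval mu gam (Suc k) ?p r = (\<lambda>i. \<Sum>m\<in>{0, 1, 2}. cd_mult mu gam (Suc k) (?p m) (cd_pow mu gam (Suc k) r m) i)"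
    unfolding eval_supp
  proof (rule ext, rule sum.mono_neutral_left[OF _ sub])
    fix i show "\<forall>m\<in>{0, 1, 2} - supp ?p. cd_mult mu gam (Suc k) (?p m) (cd_pow mu gam (Suc k) r m) i = 0"
      by (auto simp: supp_def)
  qed simp
  also have "\<dots> = (\<lambda>i. cd_norm mu gam (Suc k) l * cd_const 1 i - cd_tr (Suc k) l * r i + cd_mult mu gam (Suc k) r r i)"
  proof -
    have p1: "cd_pow mu gam (Suc k) r 1 = r" using mult_const[OF r, of mu gam 1] by simp
    have p2: "cd_pow mu gam (Suc k) r 2 = cd_mult mu gam (Suc k) r r"
      using p1 by (simp add: numeral_2_eq_2)
    have "cd_mult mu gam (Suc k) (?p m) (cd_pow mu gam (Suc k) r m) = (\<lambda>i. coeff [:cd_norm mu gam (Suc k) l, - cd_tr (Suc k) l, 1:] m * cd_pow mu gam (Suc k) r m i)" for m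
      unfolding charpoly_const using mult_const[OF pow_carrier] by blast
    moreover have c1: "cd_mult mu gam (Suc k) r (cd_const 1) = r" using mult_const[OF r, of mu gam 1] by simp
    ultimately show ?thesis by (simp add: p1 p2 fun_eq_iff coeff_triple c1)
  qed
  finally show ?thesis .
qed

lemma pmult_charpoly:
  assumes g: "\<And>j. g j \<in> cd_carrier (Suc k)"
  shows "cd_pmult mu gam (Suc k) g (cd_charpoly mu gam (Suc k) l) m i =
    (\<Sum>j\<le>m. g j i * coeff [:cd_norm mu gam (Suc k) l, - cd_tr (Suc k) (l::'a::field cd), 1:] (m - j))"
  unfolding cd_pmult_def charpoly_const using mult_const[OF g] by (simp add: mult.commute)


lemma main_Suc:
  fixes mu :: "'a::field" and gam :: "nat \<Rightarrow> 'a" and f :: "nat \<Rightarrow> 'a cd" and l :: "'a cd"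
  assumes mu: "4 * mu + 1 \<noteq> 0"
    and gk: "\<forall>j. 1 \<le> j \<and> j \<le> k \<longrightarrow> gam j \<noteq> 0"
    and f: "cd_is_poly (Suc k) f"
    and lc: "l \<in> cd_carrier (Suc k)" and ls: "l \<notin> range cd_const"
  shows "cd_spherical_root mu gam (Suc k) f l \<longleftrightarrow>
         (\<exists>g. cd_is_poly (Suc k) g \<and> f = cd_pmult mu gam (Suc k) g (cd_charpoly mu gam (Suc k) l))"
proof -
  let ?n = "Suc k"
  let ?t = "cd_tr ?n l" and ?N = "cd_norm mu gam ?n l" and ?p = "cd_charpoly mu gam ?n l"
  let ?P = "[:?N, - ?t, 1:]"
  let ?M = "cd_mult mu gam ?n"
  have lroot: "?M l l = (\<lambda>i. ?t * l i - cd_const ?N i)" using norm_props[OF lc, of mu gam] by blast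
  have root_iff: "cd_eval mu gam ?n ?p r = (\<lambda>i. 0) \<longleftrightarrow> ?M r r = (\<lambda>i. ?t * r i - cd_const ?N i)"
    if r: "r \<in> cd_carrier ?n" for r
    unfolding eval_charpoly[OF r] by (auto simp: fun_eq_iff const_1_mult[of ?N] algebra_simps)
  show ?thesis
  proof
    assume sr: "cd_spherical_root mu gam ?n f l"
    have H0: "cd_eval mu gam ?n f l = (\<lambda>i. 0)" using sr by (simp add: cd_spherical_root_def)
    have H1: "\<And>r. r \<in> cd_carrier ?n \<Longrightarrow> cd_eval mu gam ?n ?p r = (\<lambda>i. 0) \<Longrightarrow> cd_eval mu gam ?n f r = (\<lambda>i. 0)"
      using sr by (simp add: cd_spherical_root_def)
    let ?U = "Ucf ?t ?N f" and ?V = "Vcf ?t ?N f"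
    have El: "(\<lambda>i. ?U i + ?M ?V l i) = (\<lambda>i. 0)" using H0 eval_decomp[OF f lc lroot] by simp
    have Er: "?M ?V r = ?M ?V l" if r: "r \<in> sph mu gam ?n l" for r
    proof -
      have rc: "r \<in> cd_carrier ?n" and rt: "cd_tr ?n r = ?t" and rn: "cd_norm mu gam ?n r = ?N"
        using r by (simp_all add: sph_def)
      have rr: "?M r r = (\<lambda>i. ?t * r i - cd_const ?N i)" using norm_props[OF rc, of mu gam] rt rn by simp
      have "cd_eval mu gam ?n f r = (\<lambda>i. 0)" using H1[OF rc] root_iff[OF rc] rr by blast
      then have "(\<lambda>i. ?U i + ?M ?V r i) = (\<lambda>i. 0)" using eval_decomp[OF f rc rr] by simp
      then show ?thesis using El by (auto simp: fun_eq_iff) (metis add_left_cancel)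
    qed
    have V0: "?V = (\<lambda>i. 0)" using KL[OF mu gk lc ls Vcf_carrier[OF f]] Er by blast
    have U0: "?U = (\<lambda>i. 0)" using El V0 by (simp add: fun_eq_iff)
    have dv: "?P dvd Fp f i" for i using Fp_uv_dvd[OF f, of ?N ?t i] U0 V0 by simp
    define Q where "Q i = Fp f i div ?P" for i
    have FQ: "Fp f i = ?P * Q i" for i unfolding Q_def using dv[of i] by (simp only: dvd_mult_div_cancel)
    define g where "g j i = (if i < 2 ^ ?n then coeff (Q i) j else 0)" for j i
    have gc: "g j \<in> cd_carrier ?n" for j by (simp add: g_def cd_carrier_def)
    have "{j. g j \<noteq> (\<lambda>i. 0)} \<subseteq> (\<Union>i\<in>{..<2 ^ ?n}. {..degree (Q i)})"
    proof
      fix j assume "j \<in> {j. g j \<noteq> (\<lambda>i. 0)}"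
      then obtain i where "g j i \<noteq> 0" by auto
      then have "i < 2 ^ ?n" "coeff (Q i) j \<noteq> 0" by (auto simp: g_def split: if_splits)
      then show "j \<in> (\<Union>i\<in>{..<2 ^ ?n}. {..degree (Q i)})" using le_degree by blast
    qed
    then have gfin: "finite {j. g j \<noteq> (\<lambda>i. 0)}" by (rule finite_subset) simp
    have gp: "cd_is_poly ?n g" using gfin gc by (simp add: cd_is_poly_def)
    have "f = cd_pmult mu gam ?n g ?p"
    proof (rule ext, rule ext)
      fix m i
      show "f m i = cd_pmult mu gam ?n g ?p m i"
      proof (cases "i < 2 ^ ?n")
        case True
        have "cd_pmult mu gam ?n g ?p m i = (\<Sum>j\<le>m. coeff (Q i) j * coeff ?P (m - j))"
          unfolding pmult_charpoly[OF gc] using True by (simp add: g_def)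
        also have "\<dots> = coeff (Q i * ?P) m" by (rule coeff_mult[symmetric])
        also have "\<dots> = f m i" using FQ[of i] coeff_Fp[OF f, of i m] by (simp add: mult.commute)
        finally show ?thesis by simp
      next
        case False
        then have "f m i = 0" using poly_carrier[OF f, of m] by (simp add: cd_carrier_def)
        moreover have "cd_pmult mu gam ?n g ?p m i = 0"
          unfolding pmult_charpoly[OF gc] using False by (simp add: g_def)
        ultimately show ?thesis by simp
      qed
    qed
    then show "\<exists>g. cd_is_poly ?n g \<and> f = cd_pmult mu gam ?n g ?p" using gp by blast
  next
    assume "\<exists>g. cd_is_poly ?n g \<and> f = cd_pmult mu gam ?n g ?p"
    then obtain g where gp: "cd_is_poly ?n g" and fg: "f = cd_pmult mu gam ?n g ?p" by blast
    have dv: "?P dvd Fp f i" for i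
    proof -
      have "Fp f i = Fp g i * ?P"
      proof (rule poly_eqI)
        fix m
        have "coeff (Fp f i) m = f m i" by (rule coeff_Fp[OF f])
        also have "\<dots> = (\<Sum>j\<le>m. g j i * coeff ?P (m - j))"
          unfolding fg by (rule pmult_charpoly[OF poly_carrier[OF gp]])
        also have "\<dots> = coeff (Fp g i * ?P) m" by (simp only: coeff_mult coeff_Fp[OF gp])
        finally show "coeff (Fp f i) m = coeff (Fp g i * ?P) m" .
      qed
      then show ?thesis by (metis dvd_triv_right)
    qed
    have "cd_eval mu gam ?n f r = (\<lambda>i. 0)" if r: "r \<in> cd_carrier ?n" "cd_eval mu gam ?n ?p r = (\<lambda>i. 0)" for r
      using EV0[OF f dv r(1)] root_iff[OF r(1)] r(2) by blast
    moreover have "cd_eval mu gam ?n f l = (\<lambda>i. 0)" using EV0[OF f dv lc lroot] .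
    ultimately show "cd_spherical_root mu gam ?n f l" using lc ls by (simp add: cd_spherical_root_def)
  qed
qed

theorem theorem3p12:
  fixes mu :: "'a::field" and gam :: "nat \<Rightarrow> 'a" and n :: nat
    and f :: "nat \<Rightarrow> 'a cd" and l :: "'a cd"
  assumes "1 \<le> n"
    and "4 * mu + 1 \<noteq> 0"
    and "\<forall>k. 1 \<le> k \<and> k < n \<longrightarrow> gam k \<noteq> 0"
    and "cd_is_poly n f"
    and "l \<in> cd_carrier n" and "l \<notin> range cd_const"
  shows "cd_spherical_root mu gam n f l \<longleftrightarrow>
         (\<exists>g. cd_is_poly n g \<and> f = cd_pmult mu gam n g (cd_charpoly mu gam n l))"
proof -
  obtain k where n: "n = Suc k" using assms(1) by (cases n) auto
  have gk: "\<forall>j. 1 \<le> j \<and> j \<le> k \<longrightarrow> gam j \<noteq> 0" using assms(3) n by auto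
  show ?thesis unfolding n
    by (rule main_Suc[OF assms(2) gk assms(4)[unfolded n] assms(5)[unfolded n] assms(6)])
qed

end
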